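(* Let $n\ge2$, $0<r<n$, and $E_1>E_2>\dots>E_n>0$ (assumption A1), and assume (A2): $E_bS_{a,b}\notin\mathbb{Z}$ for all $a\in[1:r]$, $b\in[r+1:n]$. Using good triplets, define for $(a,c)\in[0:r-1]\times[r+1:n]$: $h(a,c)=\max\{b\in[r+1:n]:(a,b,c)\text{ good}\}$ (with $h(a,c)=r$ if no such $b$); for $(a,b)\in[0:r-1]\times[r+1:n]$: $e(a,b)=\min\{c\in[r+1:n]:(a,b,c)\text{ good}\}$ (with $e(a,b)=n+1$ if none); for $(b,c)\in[r+1:n]^2$: $g(b,c)=\min\{a\in[0:r-1]:(a,b,c)\text{ good}\}$ (with $g(b,c)=r$ if none). Let $\mathcal{X}_1=\{(a,c)\in[0:r-1]\times[r+1:n]: h(a,c)>r\}$, $\mathcal{X}_2=\{(a,b)\in[0:r-1]\times[r+1:n]: b<e(a,b)\le n\}$, $\mathcal{X}_3=\{(b,c)\in[r+1:n]^2: b\le c,\ 0<g(b,c)\le r-1\}$. Define: - for $(a,c)\in\mathcal{X}_1$, with $b=\min\{h(a,c),c\}$ and $\delta=r-a+b-c$: $p^{1,a,c}_k=1$ for $1\le k\le a$; $=\frac{\delta}{E_kS_{a+1,b}}$ for $a+1\le k\le b$; $=1$ for $b+1\le k\le c$; $=0$ otherwise; and $\gamma^{1,a,c}=\delta/S_{a+1,b}$; - for $(a,b)\in\mathcal{X}_2$, with $c=e(a,b)$: $p^{2,a,b}_k=1$ for $1\le k\le a$; $=E_b/E_k$ for $a+1\le k\le b$; $=1$ for $b+1\le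 k\le c-1$; $=r-a+b-c-E_bS_{a+1,b-1}$ for $k=c$; $=0$ otherwise; and $\gamma^{2,a,b}=E_b$; - for $(b,c)\in\mathcal{X}_3$, with $a=g(b,c)$: $p^{3,b,c}_k=1$ for $1\le k\le a-1$; $=r-a+b-c-E_bS_{a+1,b-1}$ for $k=a$; $=E_b/E_k$ for $a+1\le k\le b$; $=1$ for $b+1\le k\le c$; $=0$ otherwise; and $\gamma^{3,b,c}=E_b$; - $p^0_k=1$ for $k\le r$, $p^0_k=0$ otherwise, and $\gamma^0=E_{r+1}$. Then: (1) all vectors $\mathbf{p}^{1,a,c}$ ($(a,c)\in\mathcal{X}_1$), $\mathbf{p}^{2,a,b}$ ($(a,b)\in\mathcal{X}_2$), $\mathbf{p}^{3,b,c}$ ($(b,c)\in\mathcal{X}_3$) belong to $\mathcal{I}$; (2) each of these vectors together with its $\gamma$, as well as $(\mathbf{p}^0,\gamma^0)$, is feasible for (P-$\{1,\dots,r\}$); (3) an element of $\mathcal{A}=\{\mathbf{p}^0\}\cup\{\mathbf{p}^{1,a,c}\}_{\mathcal{X}_1}\cup\{\mathbf{p}^{2,a,b}\}_{\mathcal{X}_2}\cup\{\mathbf{p}^{3,b,c}\}_{\mathcal{X}_3}$ maximizing the objective $\sum_{j=1}^np_jE_j-\frac12\sum_{j=1}^rp_jE_j$, together with its associated $\gamma$, is an optimal solution of (P-$\{1,\dots,r\}$).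
   Context: $\mathcal{I}=\{\mathbf{p}\in[0,1]^n:\sum_kp_k=r\}$. For $1\le a,b\le n$, $S_{a,b}=\sum_{i=a}^b\frac1{E_i}$ if $b\ge a$ and $0$ otherwise. A triplet $(a,b,c)\in[0:r-1]\times[r+1:n]\times[r+1:n]$ is good if $r-a+b-c<E_bS_{a+1,b}$. (P-$\{1,\dots,r\}$) is the linear program $\max_{\mathbf{p}\in\mathcal{I},\gamma\in\mathbb{R}}\sum_{j=1}^np_jE_j-\frac12\sum_{j=1}^rp_jE_j$ subject to $p_jE_j\ge\gamma$ for $1\le j\le r$ and $\gamma\ge p_tE_t$ for $r<t\le n$. $[x:y]$ denotes the integers from $x$ to $y$ inclusive. *)

theory Defs
  imports Complex_Main
begin

text \<open>Vectors in R^n are functions nat => real, only indices 1..n matter.\<close>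

definition S :: "(nat \<Rightarrow> real) \<Rightarrow> nat \<Rightarrow> nat \<Rightarrow> real" where
  "S E a b = (if a \<le> b then (\<Sum>i=a..b. 1 / E i) else 0)"

definition good :: "(nat \<Rightarrow> real) \<Rightarrow> nat \<Rightarrow> nat \<Rightarrow> nat \<Rightarrow> nat \<Rightarrow> nat \<Rightarrow> bool" where
  "good E n r a b c \<longleftrightarrow> a \<in> {0..r-1} \<and> b \<in> {r+1..n} \<and> c \<in> {r+1..n} \<and>
     real r - real a + real b - real c < E b * S E (a+1) b"

definition hf :: "(nat \<Rightarrow> real) \<Rightarrow> nat \<Rightarrow> nat \<Rightarrow> nat \<Rightarrow> nat \<Rightarrow> nat" where
  "hf E n r a c = (if \<exists>b\<in>{r+1..n}. good E n r a b c
                    then Max {b\<in>{r+1..n}. good E n r a b c} else r)"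

definition ef :: "(nat \<Rightarrow> real) \<Rightarrow> nat \<Rightarrow> nat \<Rightarrow> nat \<Rightarrow> nat \<Rightarrow> nat" where
  "ef E n r a b = (if \<exists>c\<in>{r+1..n}. good E n r a b c
                    then Min {c\<in>{r+1..n}. good E n r a b c} else n+1)"

definition gf :: "(nat \<Rightarrow> real) \<Rightarrow> nat \<Rightarrow> nat \<Rightarrow> nat \<Rightarrow> nat \<Rightarrow> nat" where
  "gf E n r b c = (if \<exists>a\<in>{0..r-1}. good E n r a b c
                    then Min {a\<in>{0..r-1}. good E n r a b c} else r)"

definition X1 :: "(nat \<Rightarrow> real) \<Rightarrow> nat \<Rightarrow> nat \<Rightarrow> (nat \<times> nat) set" where
  "X1 E n r = {(a,c). a \<in> {0..r-1} \<and> c \<in> {r+1..n} \<and> hf E n r a c > r}"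

definition X2 :: "(nat \<Rightarrow> real) \<Rightarrow> nat \<Rightarrow> nat \<Rightarrow> (nat \<times> nat) set" where
  "X2 E n r = {(a,b). a \<in> {0..r-1} \<and> b \<in> {r+1..n} \<and> b < ef E n r a b \<and> ef E n r a b \<le> n}"

definition X3 :: "(nat \<Rightarrow> real) \<Rightarrow> nat \<Rightarrow> nat \<Rightarrow> (nat \<times> nat) set" where
  "X3 E n r = {(b,c). b \<in> {r+1..n} \<and> c \<in> {r+1..n} \<and> b \<le> c \<and>
                      0 < gf E n r b c \<and> gf E n r b c \<le> r - 1}"

definition p1 :: "(nat \<Rightarrow> real) \<Rightarrow> nat \<Rightarrow> nat \<Rightarrow> nat \<Rightarrow> nat \<Rightarrow> nat \<Rightarrow> real" where
  "p1 E n r a c k = (let b = min (hf E n r a c) c;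
                         \<delta> = real r - real a + real b - real c in
     if 1 \<le> k \<and> k \<le> a then 1
     else if a+1 \<le> k \<and> k \<le> b then \<delta> / (E k * S E (a+1) b)
     else if b+1 \<le> k \<and> k \<le> c then 1 else 0)"

definition gamma1 :: "(nat \<Rightarrow> real) \<Rightarrow> nat \<Rightarrow> nat \<Rightarrow> nat \<Rightarrow> nat \<Rightarrow> real" where
  "gamma1 E n r a c = (let b = min (hf E n r a c) c;
                           \<delta> = real r - real a + real b - real c in \<delta> / S E (a+1) b)"

definition p2 :: "(nat \<Rightarrow> real) \<Rightarrow> nat \<Rightarrow> nat \<Rightarrow> nat \<Rightarrow> nat \<Rightarrow> nat \<Rightarrow> real" where
  "p2 E n r a b k = (let c = ef E n r a b in
     if 1 \<le> k \<and> k \<le> a then 1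
     else if a+1 \<le> k \<and> k \<le> b then E b / E k
     else if b+1 \<le> k \<and> k \<le> c-1 then 1
     else if k = c then real r - real a + real b - real c - E b * S E (a+1) (b-1)
     else 0)"

definition gamma2 :: "(nat \<Rightarrow> real) \<Rightarrow> nat \<Rightarrow> nat \<Rightarrow> nat \<Rightarrow> nat \<Rightarrow> real" where
  "gamma2 E n r a b = E b"

definition p3 :: "(nat \<Rightarrow> real) \<Rightarrow> nat \<Rightarrow> nat \<Rightarrow> nat \<Rightarrow> nat \<Rightarrow> nat \<Rightarrow> real" where
  "p3 E n r b c k = (let a = gf E n r b c in
     if 1 \<le> k \<and> k \<le> a-1 then 1
     else if k = a then real r - real a + real b - real c - E b * S E (a+1) (b-1)
     else if a+1 \<le> k \<and> k \<le> b then E b / E k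
     else if b+1 \<le> k \<and> k \<le> c then 1 else 0)"

definition gamma3 :: "(nat \<Rightarrow> real) \<Rightarrow> nat \<Rightarrow> nat \<Rightarrow> nat \<Rightarrow> nat \<Rightarrow> real" where
  "gamma3 E n r b c = E b"

definition p0 :: "nat \<Rightarrow> nat \<Rightarrow> nat \<Rightarrow> real" where
  "p0 n r k = (if 1 \<le> k \<and> k \<le> r then 1 else 0)"

definition gamma0 :: "(nat \<Rightarrow> real) \<Rightarrow> nat \<Rightarrow> real" where
  "gamma0 E r = E (r+1)"

definition inI :: "nat \<Rightarrow> nat \<Rightarrow> (nat \<Rightarrow> real) \<Rightarrow> bool" where
  "inI n r p \<longleftrightarrow> (\<forall>k\<in>{1..n}. 0 \<le> p k \<and> p k \<le> 1) \<and> (\<Sum>k=1..n. p k) = real r"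

definition objective :: "(nat \<Rightarrow> real) \<Rightarrow> nat \<Rightarrow> nat \<Rightarrow> (nat \<Rightarrow> real) \<Rightarrow> real" where
  "objective E n r p = (\<Sum>j=1..n. p j * E j) - 1/2 * (\<Sum>j=1..r. p j * E j)"

definition feasibleP :: "(nat \<Rightarrow> real) \<Rightarrow> nat \<Rightarrow> nat \<Rightarrow> (nat \<Rightarrow> real) \<Rightarrow> real \<Rightarrow> bool" where
  "feasibleP E n r p \<gamma> \<longleftrightarrow> inI n r p \<and> (\<forall>j\<in>{1..r}. p j * E j \<ge> \<gamma>) \<and>
                            (\<forall>t\<in>{r+1..n}. \<gamma> \<ge> p t * E t)"

definition optimalP :: "(nat \<Rightarrow> real) \<Rightarrow> nat \<Rightarrow> nat \<Rightarrow> (nat \<Rightarrow> real) \<Rightarrow> real \<Rightarrow> bool" where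
  "optimalP E n r p \<gamma> \<longleftrightarrow> feasibleP E n r p \<gamma> \<and>
     (\<forall>q \<gamma>'. feasibleP E n r q \<gamma>' \<longrightarrow> objective E n r q \<le> objective E n r p)"

definition candidates :: "(nat \<Rightarrow> real) \<Rightarrow> nat \<Rightarrow> nat \<Rightarrow> ((nat \<Rightarrow> real) \<times> real) set" where
  "candidates E n r = {(p0 n r, gamma0 E r)}
     \<union> (\<lambda>(a,c). (p1 E n r a c, gamma1 E n r a c)) ` X1 E n r
     \<union> (\<lambda>(a,b). (p2 E n r a b, gamma2 E n r a b)) ` X2 E n r
     \<union> (\<lambda>(b,c). (p3 E n r b c, gamma3 E n r b c)) ` X3 E n r"

end

theory Submission
  imports Defs "HOL-Analysis.Analysis"
begin

lemma sum_split:
  fixes f :: "nat \<Rightarrow> real"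
  assumes "m \<le> Suc k" "k \<le> n"
  shows "sum f {m..n} = sum f {m..k} + sum f {Suc k..n}"
proof -
  have "sum f {m..<Suc k} + sum f {Suc k..<Suc n} = sum f {m..<Suc n}"
    by (rule sum.atLeastLessThan_concat) (use assms in auto)
  then show ?thesis by (simp only: atLeastLessThanSuc_atLeastAtMost)
qed

lemma sum_const_ivl: "i \<le> Suc j \<Longrightarrow> (\<Sum>k=i..j. (1::real)) = real j + 1 - real i"
  by (simp add: of_nat_diff)

lemma S_eq: "S E a b = (\<Sum>i=a..b. 1 / E i)"
  by (simp add: S_def)

lemma S_split: "a \<le> Suc k \<Longrightarrow> k \<le> b \<Longrightarrow> S E a b = S E a k + S E (Suc k) b"
  unfolding S_eq by (rule sum_split)

lemma S_last: "a \<le> b \<Longrightarrow> 1 \<le> b \<Longrightarrow> S E a b = S E a (b - 1) + 1 / E b"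
proof -
  assume h: "a \<le> b" "1 \<le> b"
  then have "S E a b = S E a (b-1) + S E (Suc (b-1)) b" by (intro S_split) auto
  moreover have "Suc (b-1) = b" using h by simp
  ultimately show ?thesis by (simp add: S_eq)
qed

locale LP =
  fixes E :: "nat \<Rightarrow> real" and n r :: nat
  assumes rpos: "0 < r" and rn: "r < n"
    and A1: "\<forall>i j. 1 \<le> i \<longrightarrow> i < j \<longrightarrow> j \<le> n \<longrightarrow> E j < E i"
    and A1pos: "E n > 0"
    and A2: "\<forall>a\<in>{1..r}. \<forall>b\<in>{r+1..n}. E b * S E a b \<notin> \<int>"
begin

lemma Elt: "1 \<le> i \<Longrightarrow> i < j \<Longrightarrow> j \<le> n \<Longrightarrow> E j < E i"
  using A1 by blast

lemma Ele: "1 \<le> i \<Longrightarrow> i \<le> j \<Longrightarrow> j \<le> n \<Longrightarrow> E j \<le> E i"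
  using Elt by (cases "i = j") (auto intro: less_imp_le)

lemma Epos: "1 \<le> k \<Longrightarrow> k \<le> n \<Longrightarrow> 0 < E k"
  using Ele[of k n] A1pos by simp

lemma S_nonneg: "1 \<le> a \<Longrightarrow> b \<le> n \<Longrightarrow> 0 \<le> S E a b"
  unfolding S_eq by (intro sum_nonneg) (auto intro!: less_imp_le[OF Epos])

lemma S_pos: "1 \<le> a \<Longrightarrow> a \<le> b \<Longrightarrow> b \<le> n \<Longrightarrow> 0 < S E a b"
  unfolding S_eq by (intro sum_pos) (auto intro: Epos)

lemma ES_card: assumes "1 \<le> lo" "hi \<le> m" "m \<le> n" and True: "lo \<le> Suc hi"
  shows "E m * S E lo hi \<le> real hi + 1 - real lo"
proof -
  have "E m * S E lo hi = (\<Sum>i=lo..hi. E m / E i)"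
    unfolding S_eq by (simp add: sum_distrib_left)
  also have "\<dots> \<le> (\<Sum>i=lo..hi. 1)"
  proof (intro sum_mono)
    fix i assume "i \<in> {lo..hi}"
    then have "E m \<le> E i" "0 < E i" using assms by (auto intro!: Ele Epos)
    then show "E m / E i \<le> 1" by simp
  qed
  also have "\<dots> = real hi + 1 - real lo" using True by (rule sum_const_ivl)
  finally show ?thesis .
qed

lemma ES_mono: "1 \<le> a \<Longrightarrow> 1 \<le> m \<Longrightarrow> m \<le> m' \<Longrightarrow> m' \<le> n \<Longrightarrow> hi \<le> n \<Longrightarrow>
    E m' * S E a hi \<le> E m * S E a hi"
  by (intro mult_right_mono Ele S_nonneg) auto

lemma good_iff: "good E n r a b c \<longleftrightarrow> a < r \<and> r+1 \<le> b \<and> b \<le> n \<and> r+1 \<le> c \<and> c \<le> n \<and>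
     real r - real a + real b - real c < E b * S E (a+1) b"
  using rpos by (auto simp: good_def)

lemma good_down:
  assumes "good E n r a h c" "r+1 \<le> b" "b \<le> h"
  shows "good E n r a b c"
proof -
  have g: "a < r" "h \<le> n" "r+1 \<le> c" "c \<le> n"
    "real r - real a + real h - real c < E h * S E (a+1) h"
    using assms(1) by (auto simp: good_iff)
  have "E h * S E (a+1) h = E h * S E (a+1) b + E h * S E (Suc b) h"
    using assms g by (subst S_split[of _ b]) (auto simp: algebra_simps)
  also have "\<dots> \<le> E b * S E (a+1) b + (real h + 1 - real (Suc b))"
    using assms g by (intro add_mono ES_mono ES_card) auto
  finally show ?thesis using g assms by (auto simp: good_iff)
qed

lemma hf_facts:
  assumes "(a,c) \<in> X1 E n r"
  defines "b \<equiv> min (hf E n r a c) c"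
  shows "r+1 \<le> b" "b \<le> c" "good E n r a b c" "b < c \<Longrightarrow> \<not> good E n r a (b+1) c"
    "a < r" "r+1 \<le> c" "c \<le> n"
proof -
  have ac: "a \<le> r-1" "r+1 \<le> c" "c \<le> n" and hr: "hf E n r a c > r"
    using assms by (auto simp: X1_def)
  show "a < r" using ac rpos by simp
  show "r+1 \<le> c" "c \<le> n" using ac by auto
  let ?G = "{b\<in>{r+1..n}. good E n r a b c}"
  have ex: "\<exists>b\<in>{r+1..n}. good E n r a b c"
    using hr by (auto simp: hf_def split: if_splits)
  then have hG: "hf E n r a c = Max ?G" by (simp add: hf_def)
  have fin: "finite ?G" by simp
  have ne: "?G \<noteq> {}" using ex by auto
  have hin: "hf E n r a c \<in> ?G" unfolding hG using fin ne by (rule Max_in)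
  then have hgood: "good E n r a (hf E n r a c) c" and hrng: "r+1 \<le> hf E n r a c" by auto
  show "r+1 \<le> b" using hrng ac by (simp add: b_def)
  show "b \<le> c" by (simp add: b_def)
  show "good E n r a b c"
    using good_down[OF hgood, of b] hrng ac by (auto simp: b_def)
  show "\<not> good E n r a (b+1) c" if "b < c"
  proof
    assume g: "good E n r a (b+1) c"
    then have "b+1 \<in> ?G" by (auto simp: good_iff)
    then have "b+1 \<le> Max ?G" using fin by (intro Max_ge)
    then have "b+1 \<le> hf E n r a c" using hG by simp
    then show False using that by (auto simp: b_def)
  qed
qed

lemma ef_facts:
  assumes "(a,b) \<in> X2 E n r"
  defines "c \<equiv> ef E n r a b"
  shows "b < c" "c \<le> n" "good E n r a b c" "\<not> good E n r a b (c-1)"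
    "a < r" "r+1 \<le> b" "b \<le> n"
proof -
  have ab: "a \<le> r-1" "r+1 \<le> b" "b \<le> n" "b < c" "c \<le> n"
    using assms by (auto simp: X2_def)
  show "a < r" "r+1 \<le> b" "b \<le> n" "b < c" "c \<le> n" using ab rpos by auto
  let ?G = "{c\<in>{r+1..n}. good E n r a b c}"
  have ex: "\<exists>c\<in>{r+1..n}. good E n r a b c"
    using ab by (auto simp: c_def ef_def split: if_splits)
  then have cG: "c = Min ?G" by (simp add: c_def ef_def)
  have fin: "finite ?G" by simp
  have ne: "?G \<noteq> {}" using ex by auto
  have cin: "c \<in> ?G" unfolding cG using fin ne by (rule Min_in)
  then show "good E n r a b c" by auto
  show "\<not> good E n r a b (c-1)"
  proof
    assume g: "good E n r a b (c-1)"
    then have "c-1 \<in> ?G" by (auto simp: good_iff)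
    then have "Min ?G \<le> c-1" using fin by (intro Min_le)
    then have "c \<le> c-1" using cG by simp
    then show False using ab by simp
  qed
qed

lemma gf_facts:
  assumes "(b,c) \<in> X3 E n r"
  defines "a \<equiv> gf E n r b c"
  shows "0 < a" "a < r" "good E n r a b c" "\<not> good E n r (a-1) b c"
    "r+1 \<le> b" "b \<le> c" "c \<le> n"
proof -
  have bc: "r+1 \<le> b" "b \<le> c" "c \<le> n" "0 < a" "a \<le> r-1"
    using assms by (auto simp: X3_def)
  show "r+1 \<le> b" "b \<le> c" "c \<le> n" "0 < a" "a < r" using bc rpos by auto
  let ?G = "{a\<in>{0..r-1}. good E n r a b c}"
  have ex: "\<exists>a\<in>{0..r-1}. good E n r a b c"
    using bc rpos by (auto simp: a_def gf_def split: if_splits)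
  then have aG: "a = Min ?G" by (simp add: a_def gf_def)
  have fin: "finite ?G" by simp
  have ne: "?G \<noteq> {}" using ex by auto
  have ain: "a \<in> ?G" unfolding aG using fin ne by (rule Min_in)
  then show "good E n r a b c" by auto
  show "\<not> good E n r (a-1) b c"
  proof
    assume g: "good E n r (a-1) b c"
    then have "a-1 \<in> ?G" using bc by (auto simp: good_iff)
    then have "Min ?G \<le> a-1" using fin by (intro Min_le)
    then have "a \<le> a-1" using aG by simp
    then show False using bc by simp
  qed
qed


lemma p1_feas:
  assumes X: "(a,c) \<in> X1 E n r"
  shows "feasibleP E n r (p1 E n r a c) (gamma1 E n r a c)"
proof -
  define b where "b = min (hf E n r a c) c"
  note hf = hf_facts[OF X, folded b_def]
  have ar: "a < r" and rb: "r+1 \<le> b" and bc: "b \<le> c" and cn: "c \<le> n" and gd: "good E n r a b c"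
    using hf by auto
  define \<delta> where "\<delta> = real r - real a + real b - real c"
  define Sb where "Sb = S E (a+1) b"
  have Sbpos: "0 < Sb" unfolding Sb_def using ar rb bc cn by (intro S_pos) auto
  have dlt: "\<delta> < E b * Sb" using gd by (simp add: good_iff \<delta>_def Sb_def)
  have Eb: "0 < E b" using rb bc cn by (intro Epos) auto
  have Eb1: "E (b+1) * Sb \<le> \<delta>" if bc': "b < c"
  proof -
    have ng: "\<not> good E n r a (b+1) c" using hf bc' by auto
    have "S E (a+1) (b+1) = Sb + 1 / E (b+1)" unfolding Sb_def using S_last[of "a+1" "b+1" E] ar rb by simp
    moreover have "0 < E (b+1)" using bc' cn by (intro Epos) auto
    ultimately have "E (b+1) * S E (a+1) (b+1) = E (b+1) * Sb + 1" by (simp add: field_simps)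
    moreover have "\<not> (real r - real a + real (b+1) - real c < E (b+1) * S E (a+1) (b+1))"
      using ng ar rb bc' cn by (auto simp: good_iff)
    ultimately show ?thesis unfolding \<delta>_def by simp
  qed
  have dpos: "0 < \<delta>"
  proof (cases "b < c")
    case True
    have "0 < E (b+1) * Sb" using True cn Sbpos by (intro mult_pos_pos Epos) auto
    with Eb1 True show ?thesis by linarith
  next
    case False then have "b = c" using bc by simp
    then show ?thesis using ar by (simp add: \<delta>_def)
  qed
  define \<gamma> where "\<gamma> = \<delta> / Sb"
  have gam: "gamma1 E n r a c = \<gamma>" by (simp add: gamma1_def Let_def \<gamma>_def \<delta>_def Sb_def b_def)
  have P: "p1 E n r a c k = (if 1 \<le> k \<and> k \<le> a then 1 else if a+1 \<le> k \<and> k \<le> b then \<delta> / (E k * Sb)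
      else if b+1 \<le> k \<and> k \<le> c then 1 else 0)" for k
    unfolding p1_def Let_def b_def[symmetric] \<delta>_def Sb_def by (rule refl)
  have gEb: "\<gamma> < E b" using dlt Sbpos by (simp add: \<gamma>_def divide_less_eq)
  have gpos: "0 < \<gamma>" using dpos Sbpos by (simp add: \<gamma>_def)
  have gEb1: "E (b+1) \<le> \<gamma>" if "b < c" using Eb1[OF that] Sbpos by (simp add: \<gamma>_def le_divide_eq)
  have mid: "\<delta> / (E k * Sb) * E k = \<gamma> \<and> 0 \<le> \<delta>/(E k * Sb) \<and> \<delta>/(E k*Sb) \<le> 1"
    if k: "a+1 \<le> k" "k \<le> b" for k
  proof -
    have Ek: "0 < E k" using k bc cn by (intro Epos) auto
    have "E b \<le> E k" using k bc cn by (intro Ele) auto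
    then have "E b * Sb \<le> E k * Sb" using Sbpos by (intro mult_right_mono) auto
    then have "\<delta> \<le> E k * Sb" using dlt by linarith
    then show ?thesis using Ek Sbpos dpos by (auto simp: \<gamma>_def field_simps)
  qed
  let ?f = "p1 E n r a c"
  have s1: "sum ?f {1..n} = sum ?f {1..a} + sum ?f {Suc a..n}" by (rule sum_split) (use ar rn in auto)
  have s2: "sum ?f {Suc a..n} = sum ?f {Suc a..b} + sum ?f {Suc b..n}" by (rule sum_split) (use ar rb bc cn in auto)
  have s3: "sum ?f {Suc b..n} = sum ?f {Suc b..c} + sum ?f {Suc c..n}" by (rule sum_split) (use bc cn in auto)
  have v1: "sum ?f {1..a} = real a"
  proof -
    have "sum ?f {1..a} = (\<Sum>k=1..a. (1::real))" by (intro sum.cong) (auto simp: P)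
    then show ?thesis by simp
  qed
  have v2: "sum ?f {Suc a..b} = \<delta>"
  proof -
    have "sum ?f {Suc a..b} = (\<Sum>k=Suc a..b. \<delta> / Sb * (1 / E k))" by (intro sum.cong) (auto simp: P)
    also have "\<dots> = \<delta> / Sb * Sb" by (simp add: Sb_def S_eq sum_distrib_left)
    finally show ?thesis using Sbpos by simp
  qed
  have v3: "sum ?f {Suc b..c} = real c - real b"
  proof -
    have "sum ?f {Suc b..c} = (\<Sum>k=Suc b..c. (1::real))" by (intro sum.cong) (auto simp: P)
    then show ?thesis using bc by (simp add: of_nat_diff)
  qed
  have v4: "sum ?f {Suc c..n} = 0" by (intro sum.neutral) (use ar bc rb in \<open>auto simp: P\<close>)
  have sum: "sum ?f {1..n} = real r" using s1 s2 s3 v1 v2 v3 v4 by (simp add: \<delta>_def)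
  have bnd: "0 \<le> ?f k \<and> ?f k \<le> 1" for k using mid[of k] by (auto simp: P)
  have jc: "\<gamma> \<le> ?f j * E j" if "j \<in> {1..r}" for j
  proof (cases "j \<le> a")
    case True
    have "E b \<le> E j" using that True ar rb bc cn by (intro Ele) auto
    then show ?thesis using True that gEb by (auto simp: P)
  next
    case False
    then show ?thesis using mid[of j] that rb by (auto simp: P)
  qed
  have tc: "?f t * E t \<le> \<gamma>" if "t \<in> {r+1..n}" for t
  proof -
    consider "t \<le> b" | "b < t" "t \<le> c" | "c < t" by linarith
    then show ?thesis
    proof cases
      case 1 then show ?thesis using mid[of t] that ar by (auto simp: P)
    next
      case 2
      have "E t \<le> E (b+1)" using 2 cn by (intro Ele) auto
      then show ?thesis using 2 gEb1 by (auto simp: P)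
    next
      case 3 then show ?thesis using gpos that ar bc by (auto simp: P)
    qed
  qed
  show ?thesis unfolding feasibleP_def inI_def gam using sum bnd jc tc by auto
qed


lemma p2_feas:
  assumes X: "(a,b) \<in> X2 E n r"
  shows "feasibleP E n r (p2 E n r a b) (gamma2 E n r a b)"
proof -
  define c where "c = ef E n r a b"
  note ef = ef_facts[OF X, folded c_def]
  have ar: "a < r" and rb: "r+1 \<le> b" and bc: "b < c" and cn: "c \<le> n" and gd: "good E n r a b c"
    and ng: "\<not> good E n r a b (c-1)"
    using ef by auto
  define Sm where "Sm = S E (a+1) (b-1)"
  define Sb where "Sb = S E (a+1) b"
  have Eb: "0 < E b" using rb bc cn by (intro Epos) auto
  have SbSm: "Sb = Sm + 1 / E b" unfolding Sb_def Sm_def using S_last[of "a+1" b E] ar rb by simp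
  have ESb: "E b * Sb = E b * Sm + 1" using SbSm Eb by (simp add: field_simps)
  define qc where "qc = real r - real a + real b - real c - E b * Sm"
  have qc1: "qc < 1" using gd ESb by (simp add: good_iff qc_def Sb_def)
  have qc0: "0 \<le> qc"
  proof -
    have "\<not> (real r - real a + real b - real (c-1) < E b * Sb)"
      using ng ar rb bc cn by (auto simp: good_iff Sb_def)
    moreover have "real (c-1) = real c - 1" using bc by (simp add: of_nat_diff)
    ultimately show ?thesis using ESb by (simp add: qc_def)
  qed
  have gam: "gamma2 E n r a b = E b" by (simp add: gamma2_def)
  have P: "p2 E n r a b k = (if 1 \<le> k \<and> k \<le> a then 1 else if a+1 \<le> k \<and> k \<le> b then E b / E k
      else if b+1 \<le> k \<and> k \<le> c-1 then 1 else if k = c then qc else 0)" for k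
    unfolding p2_def Let_def c_def[symmetric] qc_def Sm_def by (rule refl)
  have mid: "E b / E k * E k = E b \<and> 0 \<le> E b / E k \<and> E b / E k \<le> 1"
    if k: "1 \<le> k" "k \<le> b" for k
  proof -
    have Ek: "0 < E k" using k bc cn by (intro Epos) auto
    have "E b \<le> E k" using k bc cn by (intro Ele) auto
    then show ?thesis using Ek Eb by (auto simp: field_simps)
  qed
  let ?f = "p2 E n r a b"
  have s1: "sum ?f {1..n} = sum ?f {1..a} + sum ?f {Suc a..n}" by (rule sum_split) (use ar rn in auto)
  have s2: "sum ?f {Suc a..n} = sum ?f {Suc a..b} + sum ?f {Suc b..n}" by (rule sum_split) (use ar rb bc cn in auto)
  have s3: "sum ?f {Suc b..n} = sum ?f {Suc b..c-1} + sum ?f {Suc (c-1)..n}" by (rule sum_split) (use bc cn in auto)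
  have s4: "sum ?f {Suc (c-1)..n} = sum ?f {Suc (c-1)..c} + sum ?f {Suc c..n}" by (rule sum_split) (use bc cn in auto)
  have cc: "{Suc (c-1)..c} = {c}" using bc by auto
  have v1: "sum ?f {1..a} = real a"
  proof -
    have "sum ?f {1..a} = (\<Sum>k=1..a. (1::real))" by (intro sum.cong) (auto simp: P)
    then show ?thesis by simp
  qed
  have v2: "sum ?f {Suc a..b} = E b * Sb"
  proof -
    have "sum ?f {Suc a..b} = (\<Sum>k=Suc a..b. E b * (1 / E k))" by (intro sum.cong) (auto simp: P)
    also have "\<dots> = E b * Sb" by (simp add: Sb_def S_eq sum_distrib_left)
    finally show ?thesis .
  qed
  have v3: "sum ?f {Suc b..c-1} = real c - 1 - real b"
  proof -
    have "sum ?f {Suc b..c-1} = (\<Sum>k=Suc b..c-1. (1::real))" by (intro sum.cong) (auto simp: P)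
    then show ?thesis using bc by (simp add: of_nat_diff)
  qed
  have v4: "sum ?f {Suc (c-1)..c} = qc" using cc bc ar rb by (simp add: P)
  have v5: "sum ?f {Suc c..n} = 0" by (intro sum.neutral) (use ar bc rb in \<open>auto simp: P\<close>)
  have sum: "sum ?f {1..n} = real r" using s1 s2 s3 s4 v1 v2 v3 v4 v5 ESb by (simp add: qc_def)
  have bnd: "0 \<le> ?f k \<and> ?f k \<le> 1" if "k \<in> {1..n}" for k using mid[of k] that qc0 qc1 by (auto simp: P)
  have jc: "E b \<le> ?f j * E j" if "j \<in> {1..r}" for j
  proof (cases "j \<le> a")
    case True
    have "E b \<le> E j" using that True ar rb bc cn by (intro Ele) auto
    then show ?thesis using True that by (auto simp: P)
  next
    case False
    then show ?thesis using mid[of j] that rb by (auto simp: P)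
  qed
  have tc: "?f t * E t \<le> E b" if "t \<in> {r+1..n}" for t
  proof -
    consider "t \<le> b" | "b < t" "t \<le> c-1" | "t = c" | "c < t" by linarith
    then show ?thesis
    proof cases
      case 1 then show ?thesis using mid[of t] that ar by (auto simp: P)
    next
      case 2
      have "E t \<le> E b" using 2 cn rb by (intro Ele) auto
      then show ?thesis using 2 by (auto simp: P)
    next
      case 3
      have "E c \<le> E b" using 3 bc cn rb by (intro Ele) auto
      moreover have "0 < E c" using cn bc rb by (intro Epos) auto
      moreover have "qc * E c \<le> 1 * E c" using qc1 \<open>0 < E c\<close> by (intro mult_right_mono) auto
      ultimately have "qc * E c \<le> E b" by linarith
      then show ?thesis using 3 bc ar rb by (auto simp: P)
    next
      case 4 then show ?thesis using Eb that ar bc by (auto simp: P)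
    qed
  qed
  show ?thesis unfolding feasibleP_def inI_def gam using sum bnd jc tc by auto
qed

lemma p3_feas:
  assumes X: "(b,c) \<in> X3 E n r"
  shows "feasibleP E n r (p3 E n r b c) (gamma3 E n r b c)"
proof -
  define a where "a = gf E n r b c"
  note gf = gf_facts[OF X, folded a_def]
  have a0: "0 < a" and ar: "a < r" and rb: "r+1 \<le> b" and bc: "b \<le> c" and cn: "c \<le> n"
    and gd: "good E n r a b c" and ng: "\<not> good E n r (a-1) b c"
    using gf by auto
  define Sm where "Sm = S E (a+1) (b-1)"
  define Sb where "Sb = S E (a+1) b"
  have Eb: "0 < E b" using rb bc cn by (intro Epos) auto
  have Ea: "0 < E a" using a0 ar rn by (intro Epos) auto
  have SbSm: "Sb = Sm + 1 / E b" unfolding Sb_def Sm_def using S_last[of "a+1" b E] ar rb by simp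
  have ESb: "E b * Sb = E b * Sm + 1" using SbSm Eb by (simp add: field_simps)
  have Sa: "S E a b = 1 / E a + Sb"
  proof -
    have "S E a b = S E a a + S E (Suc a) b" using ar rb by (intro S_split) auto
    then show ?thesis by (simp add: S_eq Sb_def)
  qed
  define qa where "qa = real r - real a + real b - real c - E b * Sm"
  have qa1: "qa < 1" using gd ESb by (simp add: good_iff qa_def Sb_def)
  have qa0: "E b / E a \<le> qa"
  proof -
    have "\<not> (real r - real (a-1) + real b - real c < E b * S E (a-1+1) b)"
      using ng ar rb bc cn by (auto simp: good_iff)
    moreover have "real (a-1) = real a - 1" using a0 by (simp add: of_nat_diff)
    moreover have "a - 1 + 1 = a" using a0 by simp
    moreover have "E b * S E a b = E b / E a + E b * Sb" using Sa by (simp add: field_simps)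
    ultimately show ?thesis using ESb by (simp add: qa_def)
  qed
  have qapos: "0 \<le> qa" using qa0 Eb Ea by (smt (verit) divide_pos_pos)
  have qaE: "E b \<le> qa * E a" using qa0 Ea by (simp add: divide_le_eq)
  have gam: "gamma3 E n r b c = E b" by (simp add: gamma3_def)
  have P: "p3 E n r b c k = (if 1 \<le> k \<and> k \<le> a-1 then 1 else if k = a then qa
      else if a+1 \<le> k \<and> k \<le> b then E b / E k else if b+1 \<le> k \<and> k \<le> c then 1 else 0)" for k
    unfolding p3_def Let_def a_def[symmetric] qa_def Sm_def by (rule refl)
  have mid: "E b / E k * E k = E b \<and> 0 \<le> E b / E k \<and> E b / E k \<le> 1"
    if k: "1 \<le> k" "k \<le> b" for k
  proof -
    have Ek: "0 < E k" using k bc cn by (intro Epos) auto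
    have "E b \<le> E k" using k bc cn by (intro Ele) auto
    then show ?thesis using Ek Eb by (auto simp: field_simps)
  qed
  let ?f = "p3 E n r b c"
  have s1: "sum ?f {1..n} = sum ?f {1..a-1} + sum ?f {Suc (a-1)..n}" by (rule sum_split) (use ar rn in auto)
  have s2: "sum ?f {Suc (a-1)..n} = sum ?f {Suc (a-1)..a} + sum ?f {Suc a..n}" by (rule sum_split) (use a0 ar rn in auto)
  have s3: "sum ?f {Suc a..n} = sum ?f {Suc a..b} + sum ?f {Suc b..n}" by (rule sum_split) (use ar rb bc cn in auto)
  have s4: "sum ?f {Suc b..n} = sum ?f {Suc b..c} + sum ?f {Suc c..n}" by (rule sum_split) (use bc cn in auto)
  have aa: "{Suc (a-1)..a} = {a}" using a0 by auto
  have v1: "sum ?f {1..a-1} = real a - 1"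
  proof -
    have "sum ?f {1..a-1} = (\<Sum>k=1..a-1. (1::real))" by (intro sum.cong) (auto simp: P)
    then show ?thesis using a0 by (simp add: of_nat_diff)
  qed
  have v2: "sum ?f {Suc (a-1)..a} = qa" using aa by (simp add: P)
  have v3: "sum ?f {Suc a..b} = E b * Sb"
  proof -
    have "sum ?f {Suc a..b} = (\<Sum>k=Suc a..b. E b * (1 / E k))" by (intro sum.cong) (auto simp: P)
    also have "\<dots> = E b * Sb" by (simp add: Sb_def S_eq sum_distrib_left)
    finally show ?thesis .
  qed
  have v4: "sum ?f {Suc b..c} = real c - real b"
  proof -
    have "sum ?f {Suc b..c} = (\<Sum>k=Suc b..c. (1::real))" by (intro sum.cong) (use ar rb in \<open>auto simp: P\<close>)
    then show ?thesis using bc by (simp add: of_nat_diff)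
  qed
  have v5: "sum ?f {Suc c..n} = 0" by (intro sum.neutral) (use ar bc rb in \<open>auto simp: P\<close>)
  have sum: "sum ?f {1..n} = real r" using s1 s2 s3 s4 v1 v2 v3 v4 v5 ESb by (simp add: qa_def)
  have bnd: "0 \<le> ?f k \<and> ?f k \<le> 1" if "k \<in> {1..n}" for k using mid[of k] that qapos qa1 by (auto simp: P)
  have jc: "E b \<le> ?f j * E j" if "j \<in> {1..r}" for j
  proof -
    consider "j \<le> a-1" | "j = a" | "a < j" by linarith
    then show ?thesis
    proof cases
      case 1
      have "E b \<le> E j" using that 1 ar rb bc cn by (intro Ele) auto
      then show ?thesis using 1 that a0 by (auto simp: P)
    next
      case 2 then show ?thesis using qaE by (auto simp: P)
    next
      case 3 then show ?thesis using mid[of j] that rb by (auto simp: P)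
    qed
  qed
  have tc: "?f t * E t \<le> E b" if "t \<in> {r+1..n}" for t
  proof -
    consider "t \<le> b" | "b < t" "t \<le> c" | "c < t" by linarith
    then show ?thesis
    proof cases
      case 1 then show ?thesis using mid[of t] that ar by (auto simp: P)
    next
      case 2
      have "E t \<le> E b" using 2 cn rb by (intro Ele) auto
      then show ?thesis using 2 ar rb by (auto simp: P)
    next
      case 3 then show ?thesis using Eb that ar bc by (auto simp: P)
    qed
  qed
  show ?thesis unfolding feasibleP_def inI_def gam using sum bnd jc tc by auto
qed

lemma p0_feas: "feasibleP E n r (p0 n r) (gamma0 E r)"
proof -
  let ?f = "p0 n r"
  have s1: "sum ?f {1..n} = sum ?f {1..r} + sum ?f {Suc r..n}" by (rule sum_split) (use rn in auto)
  have v1: "sum ?f {1..r} = real r"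
  proof -
    have "sum ?f {1..r} = (\<Sum>k=1..r. (1::real))" by (intro sum.cong) (auto simp: p0_def)
    then show ?thesis by simp
  qed
  have v2: "sum ?f {Suc r..n} = 0" by (intro sum.neutral) (auto simp: p0_def)
  have E1: "0 < E (r+1)" using rn by (intro Epos) auto
  have jc: "E (r+1) \<le> ?f j * E j" if "j \<in> {1..r}" for j
    using Ele[of j "r+1"] that rn by (auto simp: p0_def)
  show ?thesis unfolding feasibleP_def inI_def gamma0_def using s1 v1 v2 jc E1
    by (auto simp: p0_def)
qed

end

lemma compact_box:
  fixes lo hi :: "nat \<Rightarrow> real"
  shows "compact (PiE UNIV (\<lambda>k. {lo k..hi k}))"
proof -
  have "compactin (product_topology (\<lambda>i. euclidean) UNIV) (PiE UNIV (\<lambda>k. {lo k..hi k}))"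
    by (subst compactin_PiE) auto
  then show ?thesis by (simp add: euclidean_product_topology)
qed

context LP begin
definition FS :: "(nat \<Rightarrow> real) set" where
  "FS = {z. feasibleP E n r z (z 0) \<and> (\<forall>k. n < k \<longrightarrow> z k = 0)}"

definition mm :: "(nat \<Rightarrow> real) \<Rightarrow> real" where
  "mm z = (\<Sum>t=r+1..n. z t)"

definition lexopt :: "(nat \<Rightarrow> real) \<Rightarrow> bool" where
  "lexopt z \<longleftrightarrow> z \<in> FS \<and> (\<forall>y\<in>FS. objective E n r y \<le> objective E n r z) \<and>
     (\<forall>y\<in>FS. objective E n r y = objective E n r z \<longrightarrow> mm y \<le> mm z) \<and>
     (\<forall>y\<in>FS. objective E n r y = objective E n r z \<and> mm y = mm z \<longrightarrow> z 0 \<le> y 0)"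

definition dirok :: "(nat \<Rightarrow> real) \<Rightarrow> (nat \<Rightarrow> real) \<Rightarrow> bool" where
  "dirok z d \<longleftrightarrow> (\<forall>k. n < k \<longrightarrow> d k = 0) \<and> (\<Sum>k=1..n. d k) = 0 \<and>
     (\<forall>k\<in>{1..n}. z k = 0 \<longrightarrow> 0 \<le> d k) \<and> (\<forall>k\<in>{1..n}. z k = 1 \<longrightarrow> d k \<le> 0) \<and>
     (\<forall>j\<in>{1..r}. z j * E j = z 0 \<longrightarrow> d 0 \<le> d j * E j) \<and>
     (\<forall>t\<in>{r+1..n}. z t * E t = z 0 \<longrightarrow> d t * E t \<le> d 0)"

lemma feasibleP_cong:
  assumes "\<forall>k\<in>{1..n}. p k = q k"
  shows "feasibleP E n r p g = feasibleP E n r q g"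
proof -
  have s: "(\<Sum>k=1..n. p k) = (\<Sum>k=1..n. q k)" using assms by (intro sum.cong) auto
  have j: "\<forall>j\<in>{1..r}. p j = q j" using assms rn by auto
  show ?thesis unfolding feasibleP_def inI_def s using assms j by auto
qed

lemma objective_cong:
  assumes "\<forall>k\<in>{1..n}. p k = q k"
  shows "objective E n r p = objective E n r q"
proof -
  have s: "(\<Sum>k=1..n. p k * E k) = (\<Sum>k=1..n. q k * E k)" using assms by (intro sum.cong) auto
  have j: "(\<Sum>k=1..r. p k * E k) = (\<Sum>k=1..r. q k * E k)" using assms rn by (intro sum.cong) auto
  show ?thesis unfolding objective_def s j ..
qed

lemma FS_compact: "compact FS"
proof -
  define lo where "lo = (\<lambda>k::nat. (0::real))"
  define hi where "hi = (\<lambda>k::nat. if k = 0 then E 1 else if k \<le> n then 1 else (0::real))"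
  let ?K = "PiE UNIV (\<lambda>k. {lo k..hi k})"
  let ?C1 = "{z::nat\<Rightarrow>real. (\<Sum>k=1..n. z k) = real r}"
  let ?C2 = "(\<Inter>j\<in>{1..r}. {z::nat\<Rightarrow>real. z 0 \<le> z j * E j})"
  let ?C3 = "(\<Inter>t\<in>{r+1..n}. {z::nat\<Rightarrow>real. z t * E t \<le> z 0})"
  have K: "compact ?K" by (rule compact_box)
  have C1: "closed ?C1"
    by (intro closed_Collect_eq continuous_intros continuous_on_product_coordinates)
  have C2: "closed ?C2"
    by (intro closed_INT ballI closed_Collect_le continuous_intros continuous_on_product_coordinates)
  have C3: "closed ?C3"
    by (intro closed_INT ballI closed_Collect_le continuous_intros continuous_on_product_coordinates)
  have eq: "FS = ?K \<inter> (?C1 \<inter> ?C2 \<inter> ?C3)"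
  proof (intro set_eqI iffI)
    fix z assume z: "z \<in> FS"
    then have F: "feasibleP E n r z (z 0)" and Z: "\<forall>k. n < k \<longrightarrow> z k = 0" by (auto simp: FS_def)
    have b01: "0 \<le> z k \<and> z k \<le> 1" if "1 \<le> k" "k \<le> n" for k
      using F that by (auto simp: feasibleP_def inI_def)
    have "z 0 \<le> z 1 * E 1" using F rpos by (auto simp: feasibleP_def)
    also have "\<dots> \<le> 1 * E 1" using b01[of 1] rn Epos[of 1] by (intro mult_right_mono) auto
    finally have g1: "z 0 \<le> E 1" by simp
    have "z n * E n \<le> z 0" using F rn by (auto simp: feasibleP_def)
    moreover have "0 \<le> z n * E n" using b01[of n] rn A1pos by auto
    ultimately have g0: "0 \<le> z 0" by linarith
    have "\<forall>k. z k \<in> {lo k..hi k}"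
    proof
      fix k
      consider "k = 0" | "1 \<le> k" "k \<le> n" | "n < k" by linarith
      then show "z k \<in> {lo k..hi k}"
      proof cases
        case 1 then show ?thesis using g0 g1 by (simp add: lo_def hi_def)
      next
        case 2 then show ?thesis using b01[of k] by (simp add: lo_def hi_def)
      next
        case 3 then show ?thesis using Z by (simp add: lo_def hi_def)
      qed
    qed
    then have "z \<in> ?K" by (simp add: PiE_iff)
    then show "z \<in> ?K \<inter> (?C1 \<inter> ?C2 \<inter> ?C3)" using F by (auto simp: feasibleP_def inI_def)
  next
    fix z assume z: "z \<in> ?K \<inter> (?C1 \<inter> ?C2 \<inter> ?C3)"
    then have K: "\<forall>k. z k \<in> {lo k..hi k}" by (simp add: PiE_iff)
    have Z: "\<forall>k. n < k \<longrightarrow> z k = 0"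
    proof (intro allI impI)
      fix k assume "n < k"
      then have "lo k = 0" "hi k = 0" by (auto simp: lo_def hi_def)
      then show "z k = 0" using K[rule_format, of k] by simp
    qed
    have b: "\<forall>k\<in>{1..n}. 0 \<le> z k \<and> z k \<le> 1"
    proof
      fix k assume k: "k \<in> {1..n}"
      then have "lo k = 0" "hi k = 1" by (auto simp: lo_def hi_def)
      then show "0 \<le> z k \<and> z k \<le> 1" using K[rule_format, of k] by simp
    qed
    show "z \<in> FS" using z Z b unfolding FS_def feasibleP_def inI_def by auto
  qed
  show ?thesis unfolding eq using K C1 C2 C3 by (intro compact_Int_closed closed_Int)
qed

lemma coord_cont: "continuous_on A (\<lambda>x::nat\<Rightarrow>real. x j)"
  by (rule continuous_on_subset[OF continuous_on_product_coordinates]) auto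

lemma obj_cont: "continuous_on A (\<lambda>z. objective E n r z)"
  unfolding objective_def by (intro continuous_intros coord_cont)

lemma mm_cont: "continuous_on A (\<lambda>z. mm z)"
  unfolding mm_def by (intro continuous_intros coord_cont)

lemma lex_exists: "\<exists>z. lexopt z"
proof -
  define z0 where "z0 = (p0 n r)(0 := E (r+1))"
  have "feasibleP E n r z0 (z0 0)"
    using p0_feas feasibleP_cong[of z0 "p0 n r" "E (r+1)"] by (auto simp: z0_def gamma0_def)
  moreover have "\<forall>k. n < k \<longrightarrow> z0 k = 0" using rn by (auto simp: z0_def p0_def)
  ultimately have ne: "FS \<noteq> {}" by (auto simp: FS_def)
  obtain z1 where z1: "z1 \<in> FS" "\<forall>y\<in>FS. objective E n r y \<le> objective E n r z1"
    using continuous_attains_sup[OF FS_compact ne obj_cont] by blast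
  define M1 where "M1 = FS \<inter> {y. objective E n r y = objective E n r z1}"
  have M1c: "compact M1" unfolding M1_def
    by (intro compact_Int_closed FS_compact closed_Collect_eq obj_cont continuous_on_const)
  have M1ne: "M1 \<noteq> {}" using z1 by (auto simp: M1_def)
  obtain z2 where z2: "z2 \<in> M1" "\<forall>y\<in>M1. mm y \<le> mm z2"
    using continuous_attains_sup[OF M1c M1ne mm_cont] by blast
  define M2 where "M2 = M1 \<inter> {y. mm y = mm z2}"
  have M2c: "compact M2" unfolding M2_def
    by (intro compact_Int_closed M1c closed_Collect_eq mm_cont continuous_on_const)
  have M2ne: "M2 \<noteq> {}" using z2 by (auto simp: M2_def)
  have c0: "continuous_on M2 (\<lambda>y::nat\<Rightarrow>real. y 0)" by (rule coord_cont)
  obtain z3 where z3: "z3 \<in> M2" "\<forall>y\<in>M2. z3 0 \<le> y 0"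
    using continuous_attains_inf[OF M2c M2ne c0] by blast
  have z3F: "z3 \<in> FS" and o3: "objective E n r z3 = objective E n r z1" and m3: "mm z3 = mm z2"
    using z3(1) by (auto simp: M1_def M2_def)
  have "lexopt z3" unfolding lexopt_def
  proof (intro conjI ballI impI)
    show "z3 \<in> FS" by (rule z3F)
    fix y assume y: "y \<in> FS"
    show "objective E n r y \<le> objective E n r z3" using z1(2) y o3 by simp
    { assume "objective E n r y = objective E n r z3"
      then have "y \<in> M1" using y o3 by (simp add: M1_def)
      then show "mm y \<le> mm z3" using z2(2) m3 by simp }
    { assume "objective E n r y = objective E n r z3 \<and> mm y = mm z3"
      then have "y \<in> M2" using y o3 m3 by (simp add: M1_def M2_def)
      then show "z3 0 \<le> y 0" using z3(2) by simp }
  qed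
  then show ?thesis by blast
qed

lemma ev_aff:
  fixes a b :: real
  assumes "0 \<le> a" "a = 0 \<Longrightarrow> 0 \<le> b"
  shows "eventually (\<lambda>\<epsilon>. 0 \<le> a + \<epsilon> * b) (at_right 0)"
proof (cases "a = 0")
  case True
  have "eventually (\<lambda>\<epsilon>. 0 < \<epsilon>) (at_right (0::real))" by (rule eventually_at_right_less)
  then show ?thesis by eventually_elim (use True assms in auto)
next
  case False
  then have ap: "0 < a" using assms by simp
  have "((\<lambda>\<epsilon>. a + \<epsilon> * b) \<longlongrightarrow> a + 0 * b) (at_right 0)" by (intro tendsto_intros)
  then have "eventually (\<lambda>\<epsilon>. 0 < a + \<epsilon> * b) (at_right 0)" using ap by (intro order_tendstoD(1)) auto
  then show ?thesis by eventually_elim auto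
qed

lemma obj_lin: "objective E n r (\<lambda>k. z k + \<epsilon> * d k) = objective E n r z + \<epsilon> * objective E n r d"
  unfolding objective_def by (simp add: algebra_simps sum.distrib sum_distrib_left)

lemma mm_lin: "mm (\<lambda>k. z k + \<epsilon> * d k) = mm z + \<epsilon> * mm d"
  unfolding mm_def by (simp add: algebra_simps sum.distrib sum_distrib_left)

lemma dir_step:
  assumes z: "z \<in> FS" and d: "dirok z d"
  shows "\<exists>\<epsilon>>0. (\<lambda>k. z k + \<epsilon> * d k) \<in> FS"
proof -
  from z have F: "feasibleP E n r z (z 0)" and Z: "\<forall>k. n < k \<longrightarrow> z k = 0" by (auto simp: FS_def)
  from F have b: "\<forall>k\<in>{1..n}. 0 \<le> z k \<and> z k \<le> 1" and s: "(\<Sum>k=1..n. z k) = real r"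
    and jj: "\<forall>j\<in>{1..r}. z 0 \<le> z j * E j" and tt: "\<forall>t\<in>{r+1..n}. z t * E t \<le> z 0"
    by (auto simp: feasibleP_def inI_def)
  from d have d0: "\<forall>k. n < k \<longrightarrow> d k = 0" and ds: "(\<Sum>k=1..n. d k) = 0"
    and dlo: "\<forall>k\<in>{1..n}. z k = 0 \<longrightarrow> 0 \<le> d k" and dhi: "\<forall>k\<in>{1..n}. z k = 1 \<longrightarrow> d k \<le> 0"
    and dj: "\<forall>j\<in>{1..r}. z j * E j = z 0 \<longrightarrow> d 0 \<le> d j * E j"
    and dt: "\<forall>t\<in>{r+1..n}. z t * E t = z 0 \<longrightarrow> d t * E t \<le> d 0"
    by (auto simp: dirok_def)
  have e1: "eventually (\<lambda>\<epsilon>. \<forall>k\<in>{1..n}. 0 \<le> z k + \<epsilon> * d k) (at_right 0)"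
    by (intro eventually_ball_finite ballI ev_aff) (use b dlo in auto)
  have e2: "eventually (\<lambda>\<epsilon>. \<forall>k\<in>{1..n}. 0 \<le> (1 - z k) + \<epsilon> * (- d k)) (at_right 0)"
    by (intro eventually_ball_finite ballI ev_aff) (use b dhi in auto)
  have e3: "eventually (\<lambda>\<epsilon>. \<forall>j\<in>{1..r}. 0 \<le> (z j * E j - z 0) + \<epsilon> * (d j * E j - d 0)) (at_right 0)"
    by (intro eventually_ball_finite ballI ev_aff) (use jj dj in auto)
  have e4: "eventually (\<lambda>\<epsilon>. \<forall>t\<in>{r+1..n}. 0 \<le> (z 0 - z t * E t) + \<epsilon> * (d 0 - d t * E t)) (at_right 0)"
    by (intro eventually_ball_finite ballI ev_aff) (use tt dt in auto)
  have e5: "eventually (\<lambda>\<epsilon>. 0 < \<epsilon>) (at_right (0::real))" by (rule eventually_at_right_less)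
  have "eventually (\<lambda>\<epsilon>. (\<forall>k\<in>{1..n}. 0 \<le> z k + \<epsilon> * d k) \<and> (\<forall>k\<in>{1..n}. 0 \<le> (1 - z k) + \<epsilon> * (- d k)) \<and>
     (\<forall>j\<in>{1..r}. 0 \<le> (z j * E j - z 0) + \<epsilon> * (d j * E j - d 0)) \<and>
     (\<forall>t\<in>{r+1..n}. 0 \<le> (z 0 - z t * E t) + \<epsilon> * (d 0 - d t * E t)) \<and> 0 < \<epsilon>) (at_right 0)"
    using e1 e2 e3 e4 e5 by (intro eventually_conj)
  then obtain \<epsilon> where ep: "(\<forall>k\<in>{1..n}. 0 \<le> z k + \<epsilon> * d k)" "(\<forall>k\<in>{1..n}. 0 \<le> (1 - z k) + \<epsilon> * (- d k))"
     "(\<forall>j\<in>{1..r}. 0 \<le> (z j * E j - z 0) + \<epsilon> * (d j * E j - d 0))"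
     "(\<forall>t\<in>{r+1..n}. 0 \<le> (z 0 - z t * E t) + \<epsilon> * (d 0 - d t * E t))" "0 < \<epsilon>"
    using eventually_happens'[OF trivial_limit_at_right_real] by blast
  let ?y = "\<lambda>k. z k + \<epsilon> * d k"
  have sy: "(\<Sum>k=1..n. ?y k) = real r" using s ds by (simp add: sum.distrib sum_distrib_left[symmetric])
  have by': "\<forall>k\<in>{1..n}. 0 \<le> ?y k \<and> ?y k \<le> 1" using ep(1,2) by (auto simp: algebra_simps)
  have jy: "\<forall>j\<in>{1..r}. ?y 0 \<le> ?y j * E j" using ep(3) by (auto simp: algebra_simps)
  have ty: "\<forall>t\<in>{r+1..n}. ?y t * E t \<le> ?y 0" using ep(4) by (auto simp: algebra_simps)
  have "?y \<in> FS" unfolding FS_def feasibleP_def inI_def using sy by' jy ty Z d0 by auto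
  then show ?thesis using ep(5) by blast
qed

lemma lex_dir:
  assumes L: "lexopt z" and d: "dirok z d"
  shows "objective E n r d \<le> 0" "objective E n r d = 0 \<Longrightarrow> mm d \<le> 0"
    "objective E n r d = 0 \<Longrightarrow> mm d = 0 \<Longrightarrow> 0 \<le> d 0"
proof -
  have z: "z \<in> FS" using L by (simp add: lexopt_def)
  obtain \<epsilon> where ep: "0 < \<epsilon>" and y: "(\<lambda>k. z k + \<epsilon> * d k) \<in> FS" using dir_step[OF z d] by blast
  have o: "objective E n r (\<lambda>k. z k + \<epsilon> * d k) \<le> objective E n r z" using L y by (simp add: lexopt_def)
  then show od: "objective E n r d \<le> 0" using ep by (simp add: obj_lin mult_le_0_iff)
  assume o0: "objective E n r d = 0"
  then have oe: "objective E n r (\<lambda>k. z k + \<epsilon> * d k) = objective E n r z" by (simp add: obj_lin)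
  then have "mm (\<lambda>k. z k + \<epsilon> * d k) \<le> mm z" using L y by (simp add: lexopt_def)
  then show "mm d \<le> 0" using ep by (simp add: mm_lin mult_le_0_iff)
  assume "mm d = 0"
  then have "mm (\<lambda>k. z k + \<epsilon> * d k) = mm z" by (simp add: mm_lin)
  then have "z 0 \<le> z 0 + \<epsilon> * d 0" using L y oe by (auto simp: lexopt_def)
  then show "0 \<le> d 0" using ep by (simp add: zero_le_mult_iff)
qed

lemma lex_dir2:
  assumes L: "lexopt z" and d: "dirok z d" and d': "dirok z (\<lambda>k. - d k)"
  shows "objective E n r d = 0" "mm d = 0"
proof -
  have neg: "objective E n r (\<lambda>k. - d k) = - objective E n r d"
    unfolding objective_def by (simp add: sum_negf)
  have negm: "mm (\<lambda>k. - d k) = - mm d" unfolding mm_def by (simp add: sum_negf)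
  show o: "objective E n r d = 0" using lex_dir(1)[OF L d] lex_dir(1)[OF L d'] neg by linarith
  show "mm d = 0" using lex_dir(2)[OF L d o] lex_dir(2)[OF L d'] neg negm o by fastforce
qed

end


lemma sum_box:
  fixes f :: "nat \<Rightarrow> real"
  shows "(\<Sum>k=m..N. if lo \<le> k \<and> k \<le> hi then f k else 0) = (\<Sum>k=max m lo..min N hi. f k)"
proof -
  have "(\<Sum>k=m..N. if lo \<le> k \<and> k \<le> hi then f k else 0) = (\<Sum>k=m..N. if k \<in> {lo..hi} then f k else 0)"
    by simp
  also have "\<dots> = sum f ({m..N} \<inter> {lo..hi})" by (rule sum.inter_restrict[symmetric]) simp
  also have "{m..N} \<inter> {lo..hi} = {max m lo..min N hi}" by auto
  finally show ?thesis .
qed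


lemma unit_sum: "finite A \<Longrightarrow> (\<Sum>k\<in>A. (if k = i then (1::real) else 0) * f k) = (if i \<in> A then f i else 0)"
proof -
  assume A: "finite A"
  have "(\<Sum>k\<in>A. (if k = i then 1 else 0) * f k) = (\<Sum>k\<in>A. if k = i then f k else 0)" by (intro sum.cong) auto
  then show ?thesis using A by simp
qed

lemma unit_diff_sum: "finite A \<Longrightarrow> (\<Sum>k\<in>A. ((if k = i then (1::real) else 0) - (if k = i' then 1 else 0)) * f k) =
   (if i \<in> A then f i else 0) - (if i' \<in> A then f i' else 0)"
  by (simp add: left_diff_distrib sum_subtractf unit_sum del: sum.delta sum.delta')

lemma unit_diff_sum0: "finite A \<Longrightarrow> (\<Sum>k\<in>A. ((if k = i then (1::real) else 0) - (if k = i' then 1 else 0))) =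
   (if i \<in> A then 1 else 0) - (if i' \<in> A then 1 else 0)"
  by (simp add: sum_subtractf)

context LP begin

definition w :: "nat \<Rightarrow> real" where "w i = (if i \<le> r then E i / 2 else E i)"

lemma obj_unit_diff:
  assumes "1 \<le> i" "i \<le> n" "1 \<le> i'" "i' \<le> n"
  shows "objective E n r (\<lambda>k. (if k = i then 1 else 0) - (if k = i' then 1 else 0)) = w i - w i'"
proof -
  have a: "(\<Sum>k=1..n. ((if k = i then 1 else 0) - (if k = i' then 1 else 0)) * E k) = E i - E i'"
    using assms by (simp add: unit_diff_sum)
  have b: "(\<Sum>k=1..r. ((if k = i then 1 else 0) - (if k = i' then 1 else 0)) * E k) =
      (if i \<le> r then E i else 0) - (if i' \<le> r then E i' else 0)"
    using assms by (simp add: unit_diff_sum)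
  show ?thesis unfolding objective_def a b w_def by (auto simp: field_simps)
qed

lemma mm_unit_diff:
  shows "mm (\<lambda>k. (if k = i then 1 else 0) - (if k = i' then 1 else 0)) =
     (if r+1 \<le> i \<and> i \<le> n then 1 else 0) - (if r+1 \<le> i' \<and> i' \<le> n then 1 else 0)"
  unfolding mm_def by (simp add: unit_diff_sum0)

lemma lex_feas:
  assumes "lexopt z"
  shows "\<forall>k\<in>{1..n}. 0 \<le> z k \<and> z k \<le> 1" "(\<Sum>k=1..n. z k) = real r"
    "\<forall>j\<in>{1..r}. z 0 \<le> z j * E j" "\<forall>t\<in>{r+1..n}. z t * E t \<le> z 0"
    "\<forall>k. n < k \<longrightarrow> z k = 0" "0 \<le> z 0"
proof -
  have z: "z \<in> FS" using assms by (simp add: lexopt_def)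
  then show b: "\<forall>k\<in>{1..n}. 0 \<le> z k \<and> z k \<le> 1" and "(\<Sum>k=1..n. z k) = real r"
    "\<forall>j\<in>{1..r}. z 0 \<le> z j * E j" and t: "\<forall>t\<in>{r+1..n}. z t * E t \<le> z 0"
    "\<forall>k. n < k \<longrightarrow> z k = 0"
    by (auto simp: FS_def feasibleP_def inI_def)
  have "0 \<le> z n * E n" using b rn A1pos by auto
  moreover have "z n * E n \<le> z 0" using t rn by auto
  ultimately show "0 \<le> z 0" by linarith
qed

lemma E1:
  assumes L: "lexopt z" and t: "r < t" "t < t'" "t' \<le> n" and pos: "0 < z t'"
  shows "z t = 1 \<or> z t * E t = z 0"
proof (rule ccontr)
  assume nc: "\<not> (z t = 1 \<or> z t * E t = z 0)"
  define d where "d = (\<lambda>k. (if k = t then 1 else 0) - (if k = t' then (1::real) else 0))"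
  have "dirok z d" unfolding dirok_def
  proof (intro conjI ballI impI allI)
    show "\<And>k. n < k \<Longrightarrow> d k = 0" using t by (auto simp: d_def)
    show "(\<Sum>k=1..n. d k) = 0" using t rpos unfolding d_def by (simp add: unit_diff_sum0)
    show "\<And>k. k \<in> {1..n} \<Longrightarrow> z k = 0 \<Longrightarrow> 0 \<le> d k" using pos t by (auto simp: d_def)
    show "\<And>k. k \<in> {1..n} \<Longrightarrow> z k = 1 \<Longrightarrow> d k \<le> 0" using nc t by (auto simp: d_def)
    show "\<And>j. j \<in> {1..r} \<Longrightarrow> z j * E j = z 0 \<Longrightarrow> d 0 \<le> d j * E j" using t by (auto simp: d_def)
    show "\<And>s. s \<in> {r+1..n} \<Longrightarrow> z s * E s = z 0 \<Longrightarrow> d s * E s \<le> d 0"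
      using nc t Epos[of t'] by (auto simp: d_def)
  qed
  from lex_dir(1)[OF L this] have "w t - w t' \<le> 0"
    using obj_unit_diff[of t t'] t rpos unfolding d_def by simp
  moreover have "E t' < E t" using t rpos by (intro Elt) auto
  ultimately show False using t by (simp add: w_def)
qed

lemma E2:
  assumes L: "lexopt z" and j: "1 \<le> j" "j < j'" "j' \<le> r" and lt: "z j < 1"
  shows "z j' * E j' = z 0"
proof (rule ccontr)
  assume nc: "z j' * E j' \<noteq> z 0"
  note F = lex_feas[OF L]
  have "z 0 \<le> z j' * E j'" using F(3) j by auto
  then have gt: "z 0 < z j' * E j'" using nc by linarith
  then have zpos: "z j' \<noteq> 0" using F(6) by auto
  define d where "d = (\<lambda>k. (if k = j then 1 else 0) - (if k = j' then (1::real) else 0))"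
  have "dirok z d" unfolding dirok_def
  proof (intro conjI ballI impI allI)
    show "\<And>k. n < k \<Longrightarrow> d k = 0" using j rn by (auto simp: d_def)
    show "(\<Sum>k=1..n. d k) = 0" using j rn unfolding d_def by (simp add: unit_diff_sum0)
    show "\<And>k. k \<in> {1..n} \<Longrightarrow> z k = 0 \<Longrightarrow> 0 \<le> d k" using zpos j by (auto simp: d_def)
    show "\<And>k. k \<in> {1..n} \<Longrightarrow> z k = 1 \<Longrightarrow> d k \<le> 0" using lt j by (auto simp: d_def)
    show "\<And>i. i \<in> {1..r} \<Longrightarrow> z i * E i = z 0 \<Longrightarrow> d 0 \<le> d i * E i"
      using nc j Epos[of j] rn by (auto simp: d_def)
    show "\<And>s. s \<in> {r+1..n} \<Longrightarrow> z s * E s = z 0 \<Longrightarrow> d s * E s \<le> d 0"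
      using j by (auto simp: d_def)
  qed
  from lex_dir(1)[OF L this] have "w j - w j' \<le> 0"
    using obj_unit_diff[of j j'] j rn unfolding d_def by simp
  moreover have "E j' < E j" using j rn by (intro Elt) auto
  ultimately show False using j by (simp add: w_def)
qed

lemma E3:
  assumes L: "lexopt z" and j: "1 \<le> j" "j \<le> r" and t: "r < t" "t \<le> n"
    and zj: "z j < 1" "z 0 < z j * E j" and zt: "0 < z t" "z t < 1" "z t * E t < z 0"
  shows False
proof -
  note F = lex_feas[OF L]
  have zj0: "z j \<noteq> 0" using zj F(6) by auto
  define d where "d = (\<lambda>k. (if k = t then 1 else 0) - (if k = j then (1::real) else 0))"
  have nd: "(\<lambda>k. - d k) = (\<lambda>k. (if k = j then 1 else 0) - (if k = t then (1::real) else 0))"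
    by (auto simp: d_def)
  have d1: "dirok z d" unfolding dirok_def
  proof (intro conjI ballI impI allI)
    show "\<And>k. n < k \<Longrightarrow> d k = 0" using j t by (auto simp: d_def)
    show "(\<Sum>k=1..n. d k) = 0" using j t unfolding d_def by (simp add: unit_diff_sum0)
    show "\<And>k. k \<in> {1..n} \<Longrightarrow> z k = 0 \<Longrightarrow> 0 \<le> d k" using zj0 j t by (auto simp: d_def)
    show "\<And>k. k \<in> {1..n} \<Longrightarrow> z k = 1 \<Longrightarrow> d k \<le> 0" using zt j t by (auto simp: d_def)
    show "\<And>i. i \<in> {1..r} \<Longrightarrow> z i * E i = z 0 \<Longrightarrow> d 0 \<le> d i * E i"
      using zj j t by (auto simp: d_def)
    show "\<And>s. s \<in> {r+1..n} \<Longrightarrow> z s * E s = z 0 \<Longrightarrow> d s * E s \<le> d 0"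
      using zt j t by (auto simp: d_def)
  qed
  have d2: "dirok z (\<lambda>k. - d k)" unfolding dirok_def nd
  proof (intro conjI ballI impI allI)
    show "\<And>k. n < k \<Longrightarrow> (if k = j then 1 else 0) - (if k = t then (1::real) else 0) = 0" using j t by auto
    show "(\<Sum>k=1..n. (if k = j then 1 else 0) - (if k = t then (1::real) else 0)) = 0"
      using j t by (simp add: unit_diff_sum0)
    show "\<And>k. k \<in> {1..n} \<Longrightarrow> z k = 0 \<Longrightarrow> 0 \<le> (if k = j then 1 else 0) - (if k = t then (1::real) else 0)"
      using zt j t by auto
    show "\<And>k. k \<in> {1..n} \<Longrightarrow> z k = 1 \<Longrightarrow> (if k = j then 1 else 0) - (if k = t then (1::real) else 0) \<le> 0"
      using zj j t by auto
    show "\<And>i. i \<in> {1..r} \<Longrightarrow> z i * E i = z 0 \<Longrightarrow>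
        (if 0 = j then 1 else 0) - (if 0 = t then (1::real) else 0) \<le> ((if i = j then 1 else 0) - (if i = t then (1::real) else 0)) * E i"
      using zj j t by auto
    show "\<And>s. s \<in> {r+1..n} \<Longrightarrow> z s * E s = z 0 \<Longrightarrow>
        ((if s = j then 1 else 0) - (if s = t then (1::real) else 0)) * E s \<le> (if 0 = j then 1 else 0) - (if 0 = t then (1::real) else 0)"
      using zt j t by auto
  qed
  have "mm d = 0" by (rule lex_dir2(2)[OF L d1 d2])
  moreover have "mm d = 1" using j t unfolding d_def mm_unit_diff by simp
  ultimately show False by simp
qed

lemma gdec:
  assumes L: "lexopt z"
  shows "\<exists>t\<in>{r+1..n}. z t * E t = z 0"
proof (rule ccontr)
  assume nc: "\<not> ?thesis"
  define d :: "nat \<Rightarrow> real" where "d = (\<lambda>k. if k = 0 then -1 else 0)"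
  have "dirok z d" unfolding dirok_def using nc by (auto simp: d_def)
  moreover have "objective E n r d = 0"
    using objective_cong[of d "\<lambda>_. 0"] by (simp add: d_def objective_def)
  moreover have "mm d = 0" by (simp add: mm_def d_def)
  ultimately have "0 \<le> d 0" using lex_dir(3)[OF L] by blast
  then show False by (simp add: d_def)
qed

end


context LP begin

lemma struct:
  assumes L: "lexopt z" and ex: "\<exists>t\<in>{r+1..n}. 0 < z t"
  obtains c \<alpha> b where
    "r+1 \<le> c" "c \<le> n" "0 < z c" "\<forall>t. c < t \<and> t \<le> n \<longrightarrow> z t = 0"
    "1 \<le> \<alpha>" "\<alpha> \<le> r" "z \<alpha> < 1" "\<forall>j. 1 \<le> j \<and> j < \<alpha> \<longrightarrow> z j = 1"
    "\<forall>j. \<alpha> < j \<and> j \<le> r \<longrightarrow> z j * E j = z 0"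
    "r+1 \<le> b" "b \<le> c" "\<forall>t. r+1 \<le> t \<and> t \<le> b \<longrightarrow> z t * E t = z 0"
    "\<forall>t. r+1 \<le> t \<and> t \<le> n \<and> z t * E t = z 0 \<longrightarrow> t \<le> b"
    "\<forall>t. b < t \<and> t < c \<longrightarrow> z t = 1 \<and> E t < z 0"
    "b < c \<Longrightarrow> z c = 1 \<or> z c * E c = z 0 \<Longrightarrow> z c = 1 \<and> E c < z 0"
    "0 < z 0" "z 0 \<le> E b"
proof -
  note F = lex_feas[OF L]
  define C where "C = {t\<in>{r+1..n}. 0 < z t}"
  define c where "c = Max C"
  have Cf: "finite C" and Cne: "C \<noteq> {}" using ex by (auto simp: C_def)
  have cC: "c \<in> C" unfolding c_def using Cf Cne by (rule Max_in)
  have cmax: "\<And>t. t \<in> C \<Longrightarrow> t \<le> c" unfolding c_def using Cf by (simp add: Max_ge)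
  have c1: "r+1 \<le> c" "c \<le> n" "0 < z c" using cC by (auto simp: C_def)
  have c2: "\<forall>t. c < t \<and> t \<le> n \<longrightarrow> z t = 0"
  proof (intro allI impI)
    fix t assume t: "c < t \<and> t \<le> n"
    have "t \<notin> C" using cmax t by force
    moreover have "0 \<le> z t" using F(1) t c1 by auto
    ultimately show "z t = 0" using t c1 by (auto simp: C_def)
  qed
  have Ec: "0 < E c" using c1 by (intro Epos) auto
  have gpos: "0 < z 0"
  proof -
    have "z c * E c \<le> z 0" using F(4) c1 by auto
    moreover have "0 < z c * E c" using c1 Ec by simp
    ultimately show ?thesis by linarith
  qed
  have split: "(\<Sum>k=1..n. z k) = (\<Sum>k=1..r. z k) + (\<Sum>k=Suc r..n. z k)"
    by (rule sum_split) (use rn in auto)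
  have tpos: "z c \<le> (\<Sum>k=Suc r..n. z k)"
    using c1 F(1) by (intro member_le_sum) auto
  have jlt: "(\<Sum>k=1..r. z k) < real r" using split F(2) tpos c1 by linarith
  define A where "A = {j\<in>{1..r}. z j < 1}"
  have Ane: "A \<noteq> {}"
  proof
    assume "A = {}"
    then have "\<forall>j\<in>{1..r}. z j = 1" using F(1) rn by (force simp: A_def)
    then have "(\<Sum>k=1..r. z k) = (\<Sum>k=1..r. (1::real))" by (intro sum.cong) auto
    then show False using jlt by simp
  qed
  define \<alpha> where "\<alpha> = Min A"
  have Af: "finite A" by (simp add: A_def)
  have aA: "\<alpha> \<in> A" unfolding \<alpha>_def using Af Ane by (rule Min_in)
  have amin: "\<And>j. j \<in> A \<Longrightarrow> \<alpha> \<le> j" unfolding \<alpha>_def using Af by (simp add: Min_le)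
  have a1: "1 \<le> \<alpha>" "\<alpha> \<le> r" "z \<alpha> < 1" using aA by (auto simp: A_def)
  have a2: "\<forall>j. 1 \<le> j \<and> j < \<alpha> \<longrightarrow> z j = 1"
  proof (intro allI impI)
    fix j assume j: "1 \<le> j \<and> j < \<alpha>"
    have "j \<notin> A" using amin j by force
    moreover have "z j \<le> 1" using F(1) j a1 rn by auto
    ultimately show "z j = 1" using j a1 by (auto simp: A_def)
  qed
  have a3: "\<forall>j. \<alpha> < j \<and> j \<le> r \<longrightarrow> z j * E j = z 0"
    using E2[OF L] a1 by blast
  define T where "T = {t\<in>{r+1..n}. z t * E t = z 0}"
  define b where "b = Max T"
  have Tf: "finite T" by (simp add: T_def)
  have Tne: "T \<noteq> {}" using gdec[OF L] by (auto simp: T_def)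
  have bT: "b \<in> T" unfolding b_def using Tf Tne by (rule Max_in)
  have bmax: "\<And>t. t \<in> T \<Longrightarrow> t \<le> b" unfolding b_def using Tf by (simp add: Max_ge)
  have b1: "r+1 \<le> b" "b \<le> n" "z b * E b = z 0" using bT by (auto simp: T_def)
  have Eb: "0 < E b" using b1 by (intro Epos) auto
  have bC: "b \<in> C"
  proof -
    have "z b \<noteq> 0" using b1 gpos by auto
    moreover have "0 \<le> z b" using F(1) b1 by auto
    ultimately show ?thesis using b1 by (auto simp: C_def)
  qed
  have bc: "b \<le> c" using cmax bC .
  have gEb: "z 0 \<le> E b"
  proof -
    have "z b \<le> 1" using F(1) b1 by auto
    then have "z b * E b \<le> 1 * E b" using Eb by (intro mult_right_mono) auto
    then show ?thesis using b1 by simp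
  qed
  have t1: "\<forall>t. r+1 \<le> t \<and> t \<le> b \<longrightarrow> z t * E t = z 0"
  proof (intro allI impI)
    fix t assume t: "r+1 \<le> t \<and> t \<le> b"
    show "z t * E t = z 0"
    proof (cases "t = b")
      case True then show ?thesis using b1 by simp
    next
      case False
      then have "t < c" using t bc by simp
      then have "z t = 1 \<or> z t * E t = z 0" using E1[OF L, of t c] t c1 by auto
      moreover have "z t = 1 \<Longrightarrow> z t * E t = z 0"
      proof -
        assume "z t = 1"
        moreover have "E b \<le> E t" using t b1 by (intro Ele) auto
        moreover have "z t * E t \<le> z 0" using F(4) t b1 by auto
        ultimately show ?thesis using gEb by simp
      qed
      ultimately show ?thesis by blast
    qed
  qed
  have t2: "\<forall>t. r+1 \<le> t \<and> t \<le> n \<and> z t * E t = z 0 \<longrightarrow> t \<le> b"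
    using bmax by (auto simp: T_def)
  have t3: "\<forall>t. b < t \<and> t < c \<longrightarrow> z t = 1 \<and> E t < z 0"
  proof (intro allI impI)
    fix t assume t: "b < t \<and> t < c"
    have nt: "z t * E t \<noteq> z 0"
    proof
      assume "z t * E t = z 0"
      then have "t \<le> b" using t2 t b1 c1 by auto
      then show False using t by simp
    qed
    then have "z t = 1" using E1[OF L, of t c] t b1 c1 by auto
    moreover have "z t * E t \<le> z 0" using F(4) t b1 c1 by auto
    ultimately show "z t = 1 \<and> E t < z 0" using nt by auto
  qed
  have t4: "z c = 1 \<and> E c < z 0" if "b < c" "z c = 1 \<or> z c * E c = z 0"
  proof -
    have nt: "z c * E c \<noteq> z 0"
    proof
      assume "z c * E c = z 0"
      then have "c \<le> b" using t2 c1 by auto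
      then show False using that by simp
    qed
    then have "z c = 1" using that by auto
    moreover have "z c * E c \<le> z 0" using F(4) c1 by auto
    ultimately show ?thesis using nt by auto
  qed
  show ?thesis
    by (rule that[OF c1 c2 a1 a2 a3 b1(1) bc t1 t2 t3 t4 gpos gEb])
qed

end


context LP begin

lemma Ddir:
  assumes L: "lexopt z"
    and lo: "1 \<le> lo" "lo \<le> b" "b \<le> n"
    and q: "1 \<le> q" "q \<le> n" "\<not> (lo \<le> q \<and> q \<le> b)" "0 < z q" "z q < 1"
    and qnt: "z q * E q \<noteq> z 0"
    and rng: "\<forall>k. lo \<le> k \<and> k \<le> b \<longrightarrow> z k * E k = z 0 \<and> z k < 1"
    and gpos: "0 < z 0"
    and other: "\<forall>k\<in>{1..n}. \<not> (lo \<le> k \<and> k \<le> b) \<and> k \<noteq> q \<longrightarrow> z k * E k \<noteq> z 0"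
  shows "S E (max (r+1) lo) b = (if r+1 \<le> q then S E lo b else 0)"
proof -
  define d :: "nat \<Rightarrow> real" where
    "d = (\<lambda>k. (if k = 0 then 1 else 0) + (if lo \<le> k \<and> k \<le> b then 1 / E k else 0) - (if k = q then S E lo b else 0))"
  have d0: "d 0 = 1" using lo q by (simp add: d_def)
  have dv: "d k = (if lo \<le> k \<and> k \<le> b then 1 / E k else if k = q then - S E lo b else 0)" if "1 \<le> k" for k
    using that q by (auto simp: d_def)
  have sd: "(\<Sum>k=1..n. d k) = 0"
  proof -
    have "(\<Sum>k=1..n. d k) = (\<Sum>k=1..n. (if k = 0 then 1 else 0)) + (\<Sum>k=1..n. (if lo \<le> k \<and> k \<le> b then 1 / E k else 0))
        - (\<Sum>k=1..n. (if k = q then S E lo b else 0))"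
      unfolding d_def by (simp add: sum.distrib sum_subtractf)
    also have "(\<Sum>k=1..n. (if lo \<le> k \<and> k \<le> b then 1 / E k else 0)) = S E lo b"
      using lo by (simp add: sum_box S_eq max_def min_def)
    finally show ?thesis using q by simp
  qed
  have md: "mm d = S E (max (r+1) lo) b - (if r+1 \<le> q then S E lo b else 0)"
  proof -
    have "mm d = (\<Sum>k=r+1..n. (if k = 0 then 1 else 0)) + (\<Sum>k=r+1..n. (if lo \<le> k \<and> k \<le> b then 1 / E k else 0))
        - (\<Sum>k=r+1..n. (if k = q then S E lo b else 0))"
      unfolding d_def mm_def by (simp add: sum.distrib sum_subtractf)
    also have "(\<Sum>k=r+1..n. (if lo \<le> k \<and> k \<le> b then 1 / E k else 0)) = S E (max (r+1) lo) b"
      using lo by (simp add: sum_box S_eq min_def)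
    finally show ?thesis using q by simp
  qed
  have rng': "0 < z k \<and> z k < 1 \<and> z k * E k = z 0" if "lo \<le> k" "k \<le> b" for k
  proof -
    have "z k * E k = z 0" "z k < 1" using rng that by auto
    moreover have "z k \<noteq> 0" using calculation gpos by auto
    moreover have "0 \<le> z k" using lex_feas(1)[OF L] that lo by auto
    ultimately show ?thesis by auto
  qed
  have ok: "dirok z (\<lambda>k. s * d k)" if s: "s = 1 \<or> s = -1" for s
    unfolding dirok_def
  proof (intro conjI ballI impI allI)
    show "\<And>k. n < k \<Longrightarrow> s * d k = 0" using dv lo q by auto
    show "(\<Sum>k=1..n. s * d k) = 0" using sd by (simp add: sum_distrib_left[symmetric])
    show "\<And>k. k \<in> {1..n} \<Longrightarrow> z k = 0 \<Longrightarrow> 0 \<le> s * d k"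
    proof -
      fix k assume k: "k \<in> {1..n}" "z k = 0"
      then have "\<not> (lo \<le> k \<and> k \<le> b)" "k \<noteq> q" using rng' q by force+
      then show "0 \<le> s * d k" using dv k by auto
    qed
    show "\<And>k. k \<in> {1..n} \<Longrightarrow> z k = 1 \<Longrightarrow> s * d k \<le> 0"
    proof -
      fix k assume k: "k \<in> {1..n}" "z k = 1"
      then have "\<not> (lo \<le> k \<and> k \<le> b)" "k \<noteq> q" using rng' q by force+
      then show "s * d k \<le> 0" using dv k by auto
    qed
    show "\<And>j. j \<in> {1..r} \<Longrightarrow> z j * E j = z 0 \<Longrightarrow> s * d 0 \<le> s * d j * E j"
    proof -
      fix j assume j: "j \<in> {1..r}" "z j * E j = z 0"
      then have jr: "lo \<le> j \<and> j \<le> b" using other qnt rn by fastforce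
      have "0 < E j" using j rn by (intro Epos) auto
      then show "s * d 0 \<le> s * d j * E j" using dv[of j] j jr d0 by simp
    qed
    show "\<And>t. t \<in> {r+1..n} \<Longrightarrow> z t * E t = z 0 \<Longrightarrow> s * d t * E t \<le> s * d 0"
    proof -
      fix t assume t: "t \<in> {r+1..n}" "z t * E t = z 0"
      then have tr: "lo \<le> t \<and> t \<le> b" using other qnt by fastforce
      have "0 < E t" using t by (intro Epos) auto
      then show "s * d t * E t \<le> s * d 0" using dv[of t] t tr d0 by simp
    qed
  qed
  have e1: "(\<lambda>k. 1 * d k) = d" by simp
  have e2: "(\<lambda>k. -1 * d k) = (\<lambda>k. - d k)" by simp
  have "mm d = 0" using lex_dir2(2)[OF L] ok[of 1] ok[of "-1"] unfolding e1 e2 by simp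
  then show ?thesis using md by simp
qed

end


context LP begin

lemma caseB:
  assumes L: "lexopt z"
    and c1: "r+1 \<le> c" "c \<le> n" and c2: "\<forall>t. c < t \<and> t \<le> n \<longrightarrow> z t = 0"
    and a1: "1 \<le> \<alpha>" "\<alpha> \<le> r" and a2: "\<forall>j. 1 \<le> j \<and> j < \<alpha> \<longrightarrow> z j = 1"
    and a3: "\<forall>j. \<alpha> < j \<and> j \<le> r \<longrightarrow> z j * E j = z 0"
    and b1: "r+1 \<le> b" "b \<le> c" and t1: "\<forall>t. r+1 \<le> t \<and> t \<le> b \<longrightarrow> z t * E t = z 0"
    and t3: "\<forall>t. b < t \<and> t < c \<longrightarrow> z t = 1 \<and> E t < z 0"
    and t4: "b < c \<Longrightarrow> z c = 1 \<and> E c < z 0"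
    and g: "0 < z 0" "z 0 \<le> E b"
    and jl: "z \<alpha> * E \<alpha> = z 0"
  shows "\<exists>pg\<in>candidates E n r. objective E n r z \<le> objective E n r (fst pg)"
proof -
  define a where "a = \<alpha> - 1"
  define \<gamma> where "\<gamma> = z 0"
  have aa: "a + 1 = \<alpha>" "a < r" using a1 by (auto simp: a_def)
  have mid: "z k = \<gamma> / E k" if "a+1 \<le> k" "k \<le> b" for k
  proof -
    have "z k * E k = \<gamma>"
    proof (cases "k \<le> r")
      case True then show ?thesis using a3 jl that aa by (cases "k = \<alpha>") (auto simp: \<gamma>_def)
    next
      case False then show ?thesis using t1 that by (auto simp: \<gamma>_def)
    qed
    moreover have "0 < E k" using that b1 c1 aa by (intro Epos) auto
    ultimately show ?thesis by (simp add: field_simps)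
  qed
  have hi: "z k = 1 \<and> E k < \<gamma>" if "b < k" "k \<le> c" for k
    using t3 t4 that by (cases "k = c") (auto simp: \<gamma>_def)
  have lo: "z k = 1" if "1 \<le> k" "k \<le> a" for k using a2 that aa by auto
  have zero: "z k = 0" if "c < k" "k \<le> n" for k using c2 that by auto
  define Sb where "Sb = S E (a+1) b"
  define \<delta> where "\<delta> = real r - real a + real b - real c"
  have Sbpos: "0 < Sb" unfolding Sb_def using aa b1 c1 by (intro S_pos) auto
  have sumeq: "\<gamma> * Sb = \<delta>"
  proof -
    have s1: "sum z {1..n} = sum z {1..a} + sum z {Suc a..n}" by (rule sum_split) (use aa rn in auto)
    have s2: "sum z {Suc a..n} = sum z {Suc a..b} + sum z {Suc b..n}" by (rule sum_split) (use aa b1 c1 in auto)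
    have s3: "sum z {Suc b..n} = sum z {Suc b..c} + sum z {Suc c..n}" by (rule sum_split) (use b1 c1 in auto)
    have v1: "sum z {1..a} = real a"
    proof -
      have "sum z {1..a} = (\<Sum>k=1..a. (1::real))" by (intro sum.cong) (auto simp: lo)
      then show ?thesis by simp
    qed
    have v2: "sum z {Suc a..b} = \<gamma> * Sb"
    proof -
      have "sum z {Suc a..b} = (\<Sum>k=Suc a..b. \<gamma> * (1 / E k))" by (intro sum.cong) (auto simp: mid)
      then show ?thesis by (simp add: Sb_def S_eq sum_distrib_left)
    qed
    have v3: "sum z {Suc b..c} = real c - real b"
    proof -
      have "sum z {Suc b..c} = (\<Sum>k=Suc b..c. (1::real))" by (intro sum.cong) (auto simp: hi)
      then show ?thesis using b1 by (simp add: of_nat_diff)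
    qed
    have v4: "sum z {Suc c..n} = 0" by (intro sum.neutral) (auto simp: zero)
    have "sum z {1..n} = real r" using lex_feas(2)[OF L] .
    then show ?thesis using s1 s2 s3 v1 v2 v3 v4 by (simp add: \<delta>_def)
  qed
  have gne: "\<gamma> \<noteq> E b"
  proof
    assume "\<gamma> = E b"
    then have "E b * S E (a+1) b = \<delta>" using sumeq by (simp add: Sb_def)
    moreover have "\<delta> \<in> \<int>" unfolding \<delta>_def by (intro Ints_diff Ints_add Ints_of_nat)
    ultimately have "E b * S E (a+1) b \<in> \<int>" by simp
    moreover have "a+1 \<in> {1..r}" "b \<in> {r+1..n}" using aa b1 c1 by auto
    ultimately show False using A2 by blast
  qed
  then have glt: "\<gamma> < E b" using g by (simp add: \<gamma>_def)
  have gd: "good E n r a b c"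
  proof -
    have "\<delta> < E b * Sb" using glt Sbpos sumeq by (metis mult_strict_right_mono)
    then show ?thesis using aa b1 c1 by (simp add: good_iff \<delta>_def Sb_def)
  qed
  let ?G = "{b'\<in>{r+1..n}. good E n r a b' c}"
  have Gf: "finite ?G" by simp
  have bG: "b \<in> ?G" using gd b1 c1 by auto
  have hfG: "hf E n r a c = Max ?G" using bG by (auto simp: hf_def)
  have hb: "b \<le> hf E n r a c" unfolding hfG using Gf bG by (rule Max_ge)
  have minb: "min (hf E n r a c) c = b"
  proof (cases "b < c")
    case False then show ?thesis using hb b1 by simp
  next
    case True
    have Eb1: "E (b+1) < \<gamma>" using hi[of "b+1"] True by simp
    have "\<forall>b'\<in>?G. b' \<le> b"
    proof
      fix b' assume b': "b' \<in> ?G"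
      show "b' \<le> b"
      proof (rule ccontr)
        assume "\<not> b' \<le> b"
        then have bb: "b < b'" "b' \<le> n" using b' by auto
        have "E b' \<le> E (b+1)" using bb by (intro Ele) auto
        then have Eg: "E b' \<le> \<gamma>" using Eb1 by simp
        have "E b' * S E (a+1) b' = E b' * Sb + E b' * S E (Suc b) b'"
          using bb aa b1 by (subst S_split[of _ b]) (auto simp: Sb_def algebra_simps)
        also have "\<dots> \<le> \<gamma> * Sb + (real b' + 1 - real (Suc b))"
          using bb aa b1 Eg Sbpos by (intro add_mono mult_right_mono ES_card) auto
        finally have "E b' * S E (a+1) b' \<le> real r - real a + real b' - real c"
          using sumeq by (simp add: \<delta>_def)
        then show False using b' by (auto simp: good_iff)
      qed
    qed
    then have "Max ?G \<le> b" using Gf bG by (intro Max.boundedI) auto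
    then show ?thesis using hb hfG True by simp
  qed
  have X: "(a,c) \<in> X1 E n r" using aa c1 hb b1 by (auto simp: X1_def)
  have P: "p1 E n r a c k = (if 1 \<le> k \<and> k \<le> a then 1 else if a+1 \<le> k \<and> k \<le> b then \<delta> / (E k * Sb)
      else if b+1 \<le> k \<and> k \<le> c then 1 else 0)" for k
    unfolding p1_def Let_def minb \<delta>_def Sb_def by (rule refl)
  have eqz: "\<forall>k\<in>{1..n}. z k = p1 E n r a c k"
  proof
    fix k assume k: "k \<in> {1..n}"
    consider "k \<le> a" | "a+1 \<le> k" "k \<le> b" | "b < k" "k \<le> c" | "c < k" by linarith
    then show "z k = p1 E n r a c k"
    proof cases
      case 1 then show ?thesis using k lo by (simp add: P)
    next
      case 2
      have "z k = \<gamma> / E k" using mid 2 by simp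
      also have "\<dots> = \<delta> / (E k * Sb)" using sumeq[symmetric] Sbpos by (simp add: field_simps)
      finally show ?thesis using 2 by (simp add: P)
    next
      case 3 then show ?thesis using hi aa b1 by (simp add: P)
    next
      case 4 then show ?thesis using zero k aa b1 by (simp add: P)
    qed
  qed
  have "(p1 E n r a c, gamma1 E n r a c) \<in> (\<lambda>(a,c). (p1 E n r a c, gamma1 E n r a c)) ` X1 E n r"
    by (rule image_eqI[where x="(a,c)"]) (simp_all add: X)
  then have "(p1 E n r a c, gamma1 E n r a c) \<in> candidates E n r"
    unfolding candidates_def by blast
  moreover have "objective E n r z = objective E n r (p1 E n r a c)" by (rule objective_cong[OF eqz])
  ultimately show ?thesis by force
qed

end


context LP begin

lemma caseC:
  assumes L: "lexopt z"
    and c1: "r+1 \<le> c" "c \<le> n" "0 < z c" and c2: "\<forall>t. c < t \<and> t \<le> n \<longrightarrow> z t = 0"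
    and a1: "1 \<le> \<alpha>" "\<alpha> \<le> r" and a2: "\<forall>j. 1 \<le> j \<and> j < \<alpha> \<longrightarrow> z j = 1"
    and a3: "\<forall>j. \<alpha> < j \<and> j \<le> r \<longrightarrow> z j * E j = z 0"
    and b1: "r+1 \<le> b" "b \<le> c" and t1: "\<forall>t. r+1 \<le> t \<and> t \<le> b \<longrightarrow> z t * E t = z 0"
    and t2: "\<forall>t. r+1 \<le> t \<and> t \<le> n \<and> z t * E t = z 0 \<longrightarrow> t \<le> b"
    and t3: "\<forall>t. b < t \<and> t < c \<longrightarrow> z t = 1 \<and> E t < z 0"
    and g: "0 < z 0" "z 0 \<le> E b"
    and jl: "z \<alpha> * E \<alpha> = z 0"
    and ti: "z c < 1" "z c * E c < z 0"
  shows "\<exists>pg\<in>candidates E n r. objective E n r z \<le> objective E n r (fst pg)"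
proof -
  define a where "a = \<alpha> - 1"
  define \<gamma> where "\<gamma> = z 0"
  note F = lex_feas[OF L]
  have aa: "a + 1 = \<alpha>" "a < r" using a1 by (auto simp: a_def)
  have bc: "b < c"
  proof (rule ccontr)
    assume "\<not> b < c"
    then have "b = c" using b1 by simp
    then show False using t1 ti b1 by auto
  qed
  have tight: "z k * E k = \<gamma>" if "\<alpha> \<le> k" "k \<le> b" for k
  proof (cases "k \<le> r")
    case True then show ?thesis using a3 jl that by (cases "k = \<alpha>") (auto simp: \<gamma>_def)
  next
    case False then show ?thesis using t1 that by (auto simp: \<gamma>_def)
  qed
  have Eb: "0 < E b" using b1 c1 by (intro Epos) auto
  have zb1: "z b = 1"
  proof (rule ccontr)
    assume nb: "z b \<noteq> 1"
    have "z b \<le> 1" using F(1) b1 c1 by auto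
    then have "z b < 1" using nb by linarith
    then have "z b * E b < 1 * E b" using Eb by (intro mult_strict_right_mono) auto
    then have gEb: "\<gamma> < E b" using tight[of b] a1 b1 by simp
    have rng: "\<forall>k. \<alpha> \<le> k \<and> k \<le> b \<longrightarrow> z k * E k = z 0 \<and> z k < 1"
    proof (intro allI impI conjI)
      fix k assume k: "\<alpha> \<le> k \<and> k \<le> b"
      show "z k * E k = z 0" using tight k by (simp add: \<gamma>_def)
      have "E b \<le> E k" using k a1 b1 c1 by (intro Ele) auto
      then have "z k * E k < E k" using tight k gEb by simp
      moreover have "0 < E k" using k a1 b1 c1 by (intro Epos) auto
      ultimately show "z k < 1" by simp
    qed
    have other: "\<forall>k\<in>{1..n}. \<not> (\<alpha> \<le> k \<and> k \<le> b) \<and> k \<noteq> c \<longrightarrow> z k * E k \<noteq> z 0"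
    proof (intro ballI impI)
      fix k assume k: "k \<in> {1..n}" "\<not> (\<alpha> \<le> k \<and> k \<le> b) \<and> k \<noteq> c"
      show "z k * E k \<noteq> z 0"
      proof (cases "k < \<alpha>")
        case True
        have "E b < E k" using k True a1 b1 c1 by (intro Elt) auto
        then show ?thesis using a2 k True gEb by (auto simp: \<gamma>_def)
      next
        case False
        then have bk: "b < k" using k by auto
        show ?thesis
        proof
          assume "z k * E k = z 0"
          then have "k \<le> b" using t2 k b1 bk by auto
          then show False using bk by simp
        qed
      qed
    qed
    have "S E (max (r+1) \<alpha>) b = (if r+1 \<le> c then S E \<alpha> b else 0)"
      by (rule Ddir[OF L _ _ _ _ _ _ c1(3) ti(1) _ rng g(1) other]) (use a1 b1 c1 bc ti in auto)
    then have "S E (r+1) b = S E \<alpha> b" using a1 c1 by (simp add: max_def)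
    moreover have "S E \<alpha> b = S E \<alpha> r + S E (Suc r) b" using a1 b1 by (intro S_split) auto
    moreover have "0 < S E \<alpha> r" using a1 rn by (intro S_pos) auto
    ultimately show False by simp
  qed
  have gE: "\<gamma> = E b" using tight[of b] zb1 a1 b1 by simp
  have mid: "z k = E b / E k" if "a+1 \<le> k" "k \<le> b" for k
  proof -
    have "0 < E k" using that b1 c1 aa by (intro Epos) auto
    then show ?thesis using tight[of k] that aa gE by (simp add: field_simps)
  qed
  have hi: "z k = 1" if "b < k" "k < c" for k using t3 that by auto
  have lo: "z k = 1" if "1 \<le> k" "k \<le> a" for k using a2 that aa by auto
  have zero: "z k = 0" if "c < k" "k \<le> n" for k using c2 that by auto
  define Sb where "Sb = S E (a+1) b"
  define Sm where "Sm = S E (a+1) (b-1)"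
  have SbSm: "Sb = Sm + 1 / E b" unfolding Sb_def Sm_def using S_last[of "a+1" b E] aa b1 by simp
  have ESb: "E b * Sb = E b * Sm + 1" using SbSm Eb by (simp add: field_simps)
  define qc where "qc = real r - real a + real b - real c - E b * Sm"
  have zc: "z c = qc"
  proof -
    have s1: "sum z {1..n} = sum z {1..a} + sum z {Suc a..n}" by (rule sum_split) (use aa rn in auto)
    have s2: "sum z {Suc a..n} = sum z {Suc a..b} + sum z {Suc b..n}" by (rule sum_split) (use aa b1 c1 in auto)
    have s3: "sum z {Suc b..n} = sum z {Suc b..c-1} + sum z {Suc (c-1)..n}" by (rule sum_split) (use bc c1 in auto)
    have s4: "sum z {Suc (c-1)..n} = sum z {Suc (c-1)..c} + sum z {Suc c..n}" by (rule sum_split) (use bc c1 in auto)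
    have cc: "{Suc (c-1)..c} = {c}" using bc by auto
    have v1: "sum z {1..a} = real a"
    proof -
      have "sum z {1..a} = (\<Sum>k=1..a. (1::real))" by (intro sum.cong) (auto simp: lo)
      then show ?thesis by simp
    qed
    have v2: "sum z {Suc a..b} = E b * Sb"
    proof -
      have "sum z {Suc a..b} = (\<Sum>k=Suc a..b. E b * (1 / E k))" by (intro sum.cong) (auto simp: mid)
      then show ?thesis by (simp add: Sb_def S_eq sum_distrib_left)
    qed
    have v3: "sum z {Suc b..c-1} = real c - 1 - real b"
    proof -
      have "sum z {Suc b..c-1} = (\<Sum>k=Suc b..c-1. (1::real))" by (intro sum.cong) (auto simp: hi)
      then show ?thesis using bc by (simp add: of_nat_diff)
    qed
    have v4: "sum z {Suc (c-1)..c} = z c" using cc by simp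
    have v5: "sum z {Suc c..n} = 0" by (intro sum.neutral) (auto simp: zero)
    have "sum z {1..n} = real r" using F(2) .
    then show ?thesis using s1 s2 s3 s4 v1 v2 v3 v4 v5 ESb by (simp add: qc_def)
  qed
  have gd: "good E n r a b c" using ti zc ESb aa b1 c1 by (simp add: good_iff qc_def Sb_def)
  let ?G = "{c'\<in>{r+1..n}. good E n r a b c'}"
  have Gf: "finite ?G" by simp
  have cG: "c \<in> ?G" using gd c1 by auto
  have efG: "ef E n r a b = Min ?G" using cG by (auto simp: ef_def)
  have efc: "ef E n r a b = c"
  proof -
    have "Min ?G \<le> c" using Gf cG by (rule Min_le)
    moreover have "c \<le> Min ?G"
    proof (intro Min.boundedI Gf)
      show "?G \<noteq> {}" using cG by auto
      fix c' assume c': "c' \<in> ?G"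
      show "c \<le> c'"
      proof (rule ccontr)
        assume "\<not> c \<le> c'"
        then have "c' \<le> c - 1" by simp
        then have "real c' \<le> real c - 1" using bc by linarith
        then have "E b * Sb \<le> real r - real a + real b - real c'" using zc c1 ESb by (simp add: qc_def)
        then show False using c' by (auto simp: good_iff Sb_def)
      qed
    qed
    ultimately show ?thesis using efG by simp
  qed
  have X: "(a,b) \<in> X2 E n r" using aa b1 c1 bc efc by (auto simp: X2_def)
  have P: "p2 E n r a b k = (if 1 \<le> k \<and> k \<le> a then 1 else if a+1 \<le> k \<and> k \<le> b then E b / E k
      else if b+1 \<le> k \<and> k \<le> c-1 then 1 else if k = c then qc else 0)" for k
    unfolding p2_def Let_def efc qc_def Sm_def by (rule refl)
  have eqz: "\<forall>k\<in>{1..n}. z k = p2 E n r a b k"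
  proof
    fix k assume k: "k \<in> {1..n}"
    consider "k \<le> a" | "a+1 \<le> k" "k \<le> b" | "b < k" "k < c" | "k = c" | "c < k" by linarith
    then show "z k = p2 E n r a b k"
    proof cases
      case 1 then show ?thesis using k lo by (simp add: P)
    next
      case 2 then show ?thesis using mid by (simp add: P)
    next
      case 3 then show ?thesis using hi aa b1 by (simp add: P)
    next
      case 4 then show ?thesis using zc aa b1 bc by (simp add: P)
    next
      case 5 then show ?thesis using zero k aa b1 by (simp add: P)
    qed
  qed
  have "(p2 E n r a b, gamma2 E n r a b) \<in> (\<lambda>(a,b). (p2 E n r a b, gamma2 E n r a b)) ` X2 E n r"
    by (rule image_eqI[where x="(a,b)"]) (simp_all add: X)
  then have "(p2 E n r a b, gamma2 E n r a b) \<in> candidates E n r"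
    unfolding candidates_def by blast
  moreover have "objective E n r z = objective E n r (p2 E n r a b)" by (rule objective_cong[OF eqz])
  ultimately show ?thesis by force
qed

end


context LP begin

lemma caseD:
  assumes L: "lexopt z"
    and c1: "r+1 \<le> c" "c \<le> n" "0 < z c" and c2: "\<forall>t. c < t \<and> t \<le> n \<longrightarrow> z t = 0"
    and a1: "1 \<le> \<alpha>" "\<alpha> \<le> r" "z \<alpha> < 1" and a2: "\<forall>j. 1 \<le> j \<and> j < \<alpha> \<longrightarrow> z j = 1"
    and a3: "\<forall>j. \<alpha> < j \<and> j \<le> r \<longrightarrow> z j * E j = z 0"
    and b1: "r+1 \<le> b" "b \<le> c" and t1: "\<forall>t. r+1 \<le> t \<and> t \<le> b \<longrightarrow> z t * E t = z 0"
    and t2: "\<forall>t. r+1 \<le> t \<and> t \<le> n \<and> z t * E t = z 0 \<longrightarrow> t \<le> b"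
    and t3: "\<forall>t. b < t \<and> t < c \<longrightarrow> z t = 1 \<and> E t < z 0"
    and t4: "b < c \<Longrightarrow> z c = 1 \<or> z c * E c = z 0 \<Longrightarrow> z c = 1 \<and> E c < z 0"
    and g: "0 < z 0" "z 0 \<le> E b"
    and ji: "z 0 < z \<alpha> * E \<alpha>"
    and tc: "z c = 1 \<or> z c * E c = z 0"
  shows "\<exists>pg\<in>candidates E n r. objective E n r z \<le> objective E n r (fst pg)"
proof -
  define a where "a = \<alpha>"
  define \<gamma> where "\<gamma> = z 0"
  note F = lex_feas[OF L]
  have Ea: "0 < E \<alpha>" using a1 rn by (intro Epos) auto
  have za0: "0 < z \<alpha>"
  proof -
    have "0 < z \<alpha> * E \<alpha>" using ji g by linarith
    then show ?thesis using Ea by (simp add: zero_less_mult_iff)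
  qed
  have tight: "z k * E k = \<gamma>" if "\<alpha> < k" "k \<le> b" for k
  proof (cases "k \<le> r")
    case True then show ?thesis using a3 that by (auto simp: \<gamma>_def)
  next
    case False then show ?thesis using t1 that by (auto simp: \<gamma>_def)
  qed
  have Eb: "0 < E b" using b1 c1 by (intro Epos) auto
  have zb1: "z b = 1"
  proof (rule ccontr)
    assume nb: "z b \<noteq> 1"
    have "z b \<le> 1" using F(1) b1 c1 by auto
    then have "z b < 1" using nb by linarith
    then have "z b * E b < 1 * E b" using Eb by (intro mult_strict_right_mono) auto
    then have gEb: "\<gamma> < E b" using tight[of b] a1 b1 by simp
    have rng: "\<forall>k. \<alpha>+1 \<le> k \<and> k \<le> b \<longrightarrow> z k * E k = z 0 \<and> z k < 1"
    proof (intro allI impI conjI)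
      fix k assume k: "\<alpha>+1 \<le> k \<and> k \<le> b"
      show "z k * E k = z 0" using tight k by (simp add: \<gamma>_def)
      have "E b \<le> E k" using k a1 b1 c1 by (intro Ele) auto
      then have "z k * E k < E k" using tight k gEb by simp
      moreover have "0 < E k" using k a1 b1 c1 by (intro Epos) auto
      ultimately show "z k < 1" by simp
    qed
    have other: "\<forall>k\<in>{1..n}. \<not> (\<alpha>+1 \<le> k \<and> k \<le> b) \<and> k \<noteq> \<alpha> \<longrightarrow> z k * E k \<noteq> z 0"
    proof (intro ballI impI)
      fix k assume k: "k \<in> {1..n}" "\<not> (\<alpha>+1 \<le> k \<and> k \<le> b) \<and> k \<noteq> \<alpha>"
      show "z k * E k \<noteq> z 0"
      proof (cases "k < \<alpha>")
        case True
        have "E b < E k" using k True a1 b1 c1 by (intro Elt) auto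
        then show ?thesis using a2 k True gEb by (auto simp: \<gamma>_def)
      next
        case False
        then have bk: "b < k" using k by auto
        show ?thesis
        proof
          assume "z k * E k = z 0"
          then have "k \<le> b" using t2 k b1 bk by auto
          then show False using bk by simp
        qed
      qed
    qed
    have "S E (max (r+1) (\<alpha>+1)) b = (if r+1 \<le> \<alpha> then S E (\<alpha>+1) b else 0)"
      by (rule Ddir[OF L _ _ _ _ _ _ za0 a1(3) _ rng g(1) other]) (use a1 b1 c1 ji rn in auto)
    then have "S E (r+1) b = 0" using a1 by (cases "r = \<alpha>") (auto simp: max_def)
    moreover have "0 < S E (r+1) b" using b1 c1 by (intro S_pos) auto
    ultimately show False by simp
  qed
  have gE: "\<gamma> = E b" using tight[of b] zb1 a1 b1 by simp
  have mid: "z k = E b / E k" if "a+1 \<le> k" "k \<le> b" for k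
  proof -
    have "0 < E k" using that b1 c1 by (intro Epos) auto
    then show ?thesis using tight[of k] that gE by (simp add: field_simps a_def)
  qed
  have hi: "z k = 1" if "b < k" "k \<le> c" for k using t3 t4 tc that by (cases "k = c") auto
  have lo: "z k = 1" if "1 \<le> k" "k \<le> a - 1" for k using a2 that a1 by (auto simp: a_def)
  have zero: "z k = 0" if "c < k" "k \<le> n" for k using c2 that by auto
  define Sb where "Sb = S E (a+1) b"
  define Sm where "Sm = S E (a+1) (b-1)"
  have SbSm: "Sb = Sm + 1 / E b" unfolding Sb_def Sm_def using S_last[of "a+1" b E] a1 b1 by (simp add: a_def)
  have ESb: "E b * Sb = E b * Sm + 1" using SbSm Eb by (simp add: field_simps)
  have sumeq: "real a - 1 + z a + E b * Sb + (real c - real b) = real r"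
  proof -
    have s1: "sum z {1..n} = sum z {1..a-1} + sum z {a..n}"
      using sum_split[of 1 "a-1" n z] a1 rn by (simp add: a_def)
    have s2: "sum z {a..n} = sum z {a..a} + sum z {Suc a..n}" by (rule sum_split) (use a1 rn in \<open>auto simp: a_def\<close>)
    have s3: "sum z {Suc a..n} = sum z {Suc a..b} + sum z {Suc b..n}" by (rule sum_split) (use a1 b1 c1 in \<open>auto simp: a_def\<close>)
    have s4: "sum z {Suc b..n} = sum z {Suc b..c} + sum z {Suc c..n}" by (rule sum_split) (use b1 c1 in auto)
    have v1: "sum z {1..a-1} = real a - 1"
    proof -
      have "sum z {1..a-1} = (\<Sum>k=1..a-1. (1::real))" by (intro sum.cong) (auto simp: lo)
      then show ?thesis using a1 by (simp add: of_nat_diff a_def)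
    qed
    have v2: "sum z {a..a} = z a" by simp
    have v3: "sum z {Suc a..b} = E b * Sb"
    proof -
      have "sum z {Suc a..b} = (\<Sum>k=Suc a..b. E b * (1 / E k))" by (intro sum.cong) (auto simp: mid)
      then show ?thesis by (simp add: Sb_def S_eq sum_distrib_left)
    qed
    have v4: "sum z {Suc b..c} = real c - real b"
    proof -
      have "sum z {Suc b..c} = (\<Sum>k=Suc b..c. (1::real))" by (intro sum.cong) (auto simp: hi)
      then show ?thesis using b1 by (simp add: of_nat_diff)
    qed
    have v5: "sum z {Suc c..n} = 0" by (intro sum.neutral) (auto simp: zero)
    have "sum z {1..n} = real r" using F(2) .
    then show ?thesis using s1 s2 s3 s4 v1 v2 v3 v4 v5 by simp
  qed
  have ar: "a < r"
  proof (rule ccontr)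
    assume "\<not> a < r"
    then have "a = r" using a1 by (simp add: a_def)
    have "0 \<le> Sm" unfolding Sm_def using b1 c1 by (intro S_nonneg) auto
    then have "1 \<le> E b * Sb" using ESb Eb by (simp add: mult_nonneg_nonneg)
    then have "z a \<le> 0" using sumeq \<open>a = r\<close> b1 by simp
    then show False using za0 by (simp add: a_def)
  qed
  define qa where "qa = real r - real a + real b - real c - E b * Sm"
  have zaq: "z a = qa" using sumeq ESb by (simp add: qa_def)
  have gd: "good E n r a b c" using a1(3) zaq ESb ar b1 c1 by (simp add: good_iff qa_def Sb_def a_def)
  let ?G = "{a'\<in>{0..r-1}. good E n r a' b c}"
  have Gf: "finite ?G" by simp
  have aG: "a \<in> ?G" using gd ar by auto
  have gfG: "gf E n r b c = Min ?G" using aG by (auto simp: gf_def)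
  have gfa: "gf E n r b c = a"
  proof -
    have "Min ?G \<le> a" using Gf aG by (rule Min_le)
    moreover have "a \<le> Min ?G"
    proof (intro Min.boundedI Gf)
      show "?G \<noteq> {}" using aG by auto
      fix a' assume a': "a' \<in> ?G"
      show "a \<le> a'"
      proof (rule ccontr)
        assume "\<not> a \<le> a'"
        then have aa': "a' < a" by simp
        have "S E (a'+1) b = S E (a'+1) (a-1) + S E (Suc (a-1)) b" using aa' a1 b1 by (intro S_split) (auto simp: a_def)
        moreover have "Suc (a-1) = a" using a1 by (simp add: a_def)
        moreover have "S E a b = 1 / E a + Sb"
        proof -
          have "S E a b = S E a a + S E (Suc a) b" using ar b1 by (intro S_split) auto
          then show ?thesis by (simp add: S_eq Sb_def)
        qed
        ultimately have Sd: "E b * S E (a'+1) b = E b * S E (a'+1) (a-1) + E b / E a + E b * Sb"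
          by (simp add: algebra_simps)
        have c1': "E b * S E (a'+1) (a-1) \<le> real (a-1) + 1 - real (a'+1)"
          using aa' a1 b1 c1 ar by (intro ES_card) (auto simp: a_def)
        have "real (a-1) = real a - 1" using a1 by (simp add: of_nat_diff a_def)
        moreover have "E b / E a < z a"
          using ji gE Ea by (simp add: divide_less_eq \<gamma>_def a_def mult.commute)
        ultimately have "E b * S E (a'+1) b < real r - real a' + real b - real c"
          using Sd c1' sumeq by simp
        moreover have "good E n r a' b c" using a' by simp
        ultimately show False by (simp add: good_iff)
      qed
    qed
    ultimately show ?thesis using gfG by simp
  qed
  have X: "(b,c) \<in> X3 E n r" using a1 ar b1 c1 gfa by (auto simp: X3_def a_def)
  have P: "p3 E n r b c k = (if 1 \<le> k \<and> k \<le> a-1 then 1 else if k = a then qa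
      else if a+1 \<le> k \<and> k \<le> b then E b / E k else if b+1 \<le> k \<and> k \<le> c then 1 else 0)" for k
    unfolding p3_def Let_def gfa qa_def Sm_def by (rule refl)
  have eqz: "\<forall>k\<in>{1..n}. z k = p3 E n r b c k"
  proof
    fix k assume k: "k \<in> {1..n}"
    consider "k \<le> a - 1" | "k = a" | "a+1 \<le> k" "k \<le> b" | "b < k" "k \<le> c" | "c < k" by linarith
    then show "z k = p3 E n r b c k"
    proof cases
      case 1 then show ?thesis using k lo a1 by (simp add: P a_def)
    next
      case 2 then show ?thesis using zaq a1 by (simp add: P a_def)
    next
      case 3
      then have "\<not> k \<le> a - 1" "k \<noteq> a" by auto
      then show ?thesis using mid 3 by (simp add: P)
    next
      case 4 then show ?thesis using hi ar b1 by (simp add: P)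
    next
      case 5 then show ?thesis using zero k ar b1 by (simp add: P)
    qed
  qed
  have "(p3 E n r b c, gamma3 E n r b c) \<in> (\<lambda>(b,c). (p3 E n r b c, gamma3 E n r b c)) ` X3 E n r"
    by (rule image_eqI[where x="(b,c)"]) (simp_all add: X)
  then have "(p3 E n r b c, gamma3 E n r b c) \<in> candidates E n r"
    unfolding candidates_def by blast
  moreover have "objective E n r z = objective E n r (p3 E n r b c)" by (rule objective_cong[OF eqz])
  ultimately show ?thesis by force
qed

end


context LP begin

lemma lex_cand:
  assumes L: "lexopt z"
  shows "\<exists>pg\<in>candidates E n r. objective E n r z \<le> objective E n r (fst pg)"
proof (cases "\<exists>t\<in>{r+1..n}. 0 < z t")
  case False
  note F = lex_feas[OF L]
  have tz: "\<forall>t\<in>{Suc r..n}. z t = 0"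
  proof
    fix t assume t: "t \<in> {Suc r..n}"
    then have "\<not> 0 < z t" using False by auto
    moreover have "0 \<le> z t" using F(1) t rn by auto
    ultimately show "z t = 0" by simp
  qed
  have split: "(\<Sum>k=1..n. z k) = (\<Sum>k=1..r. z k) + (\<Sum>k=Suc r..n. z k)"
    by (rule sum_split) (use rn in auto)
  have "(\<Sum>k=Suc r..n. z k) = 0" using tz by (intro sum.neutral) auto
  then have sr: "(\<Sum>k=1..r. z k) = real r" using split F(2) by simp
  have "(\<Sum>k=1..r. 1 - z k) = 0" using sr by (simp add: sum_subtractf)
  moreover have "\<forall>k\<in>{1..r}. 0 \<le> 1 - z k" using F(1) rn by auto
  ultimately have "\<forall>k\<in>{1..r}. 1 - z k = 0" using sum_nonneg_eq_0_iff[of "{1..r}" "\<lambda>k. 1 - z k"] by simp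
  then have "\<forall>k\<in>{1..n}. z k = p0 n r k" using tz by (auto simp: p0_def)
  then have "objective E n r z = objective E n r (p0 n r)" by (rule objective_cong)
  moreover have "(p0 n r, gamma0 E r) \<in> candidates E n r" by (simp add: candidates_def)
  ultimately show ?thesis by force
next
  case True
  note F = lex_feas[OF L]
  show ?thesis
  proof (rule struct[OF L True])
  fix c \<alpha> b
  assume
    c1: "r+1 \<le> c" "c \<le> n" "0 < z c" and c2: "\<forall>t. c < t \<and> t \<le> n \<longrightarrow> z t = 0"
    and a1: "1 \<le> \<alpha>" "\<alpha> \<le> r" "z \<alpha> < 1" and a2: "\<forall>j. 1 \<le> j \<and> j < \<alpha> \<longrightarrow> z j = 1"
    and a3: "\<forall>j. \<alpha> < j \<and> j \<le> r \<longrightarrow> z j * E j = z 0"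
    and b1: "r+1 \<le> b" "b \<le> c" and t1: "\<forall>t. r+1 \<le> t \<and> t \<le> b \<longrightarrow> z t * E t = z 0"
    and t2: "\<forall>t. r+1 \<le> t \<and> t \<le> n \<and> z t * E t = z 0 \<longrightarrow> t \<le> b"
    and t3: "\<forall>t. b < t \<and> t < c \<longrightarrow> z t = 1 \<and> E t < z 0"
    and t4: "b < c \<Longrightarrow> z c = 1 \<or> z c * E c = z 0 \<Longrightarrow> z c = 1 \<and> E c < z 0"
    and g: "0 < z 0" "z 0 \<le> E b"
  have jge: "z 0 \<le> z \<alpha> * E \<alpha>" using F(3) a1 by auto
  have tle: "z c * E c \<le> z 0" "z c \<le> 1" using F(4) F(1) c1 by auto
  consider (B) "z \<alpha> * E \<alpha> = z 0" "z c = 1 \<or> z c * E c = z 0"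
    | (C) "z \<alpha> * E \<alpha> = z 0" "z c < 1" "z c * E c < z 0"
    | (D) "z 0 < z \<alpha> * E \<alpha>" "z c = 1 \<or> z c * E c = z 0"
    | (A) "z 0 < z \<alpha> * E \<alpha>" "z c < 1" "z c * E c < z 0"
    using jge tle by linarith
  then show ?thesis
  proof cases
    case B
    show ?thesis
      by (rule caseB[OF L c1(1,2) c2 a1(1,2) a2 a3 b1 t1 t3 _ g B(1)]) (use t4 B(2) in auto)
  next
    case C
    show ?thesis by (rule caseC[OF L c1 c2 a1(1,2) a2 a3 b1 t1 t2 t3 g C])
  next
    case D
    show ?thesis by (rule caseD[OF L c1 c2 a1 a2 a3 b1 t1 t2 t3 t4 g D])
  next
    case A
    have False by (rule E3[OF L a1(1,2) _ c1(2) a1(3) A(1) c1(3) A(2,3)]) (use c1 in auto)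
    then show ?thesis ..
  qed
  qed
qed

lemma cand_feas: "(p,g) \<in> candidates E n r \<Longrightarrow> feasibleP E n r p g"
  unfolding candidates_def using p0_feas p1_feas p2_feas p3_feas by auto

lemma cand_opt:
  assumes pg: "(p,g) \<in> candidates E n r"
    and mx: "\<forall>(q,g')\<in>candidates E n r. objective E n r q \<le> objective E n r p"
  shows "optimalP E n r p g"
  unfolding optimalP_def
proof (intro conjI allI impI)
  show "feasibleP E n r p g" by (rule cand_feas[OF pg])
  fix q g' assume fq: "feasibleP E n r q g'"
  define y where "y = (\<lambda>k. if k = 0 then g' else if k \<le> n then q k else 0)"
  have yq: "\<forall>k\<in>{1..n}. y k = q k" by (simp add: y_def)
  have "feasibleP E n r y (y 0)" using fq feasibleP_cong[OF yq] by (simp add: y_def)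
  then have yF: "y \<in> FS" by (auto simp: FS_def y_def)
  obtain z where L: "lexopt z" using lex_exists by blast
  have "objective E n r q = objective E n r y" using objective_cong[OF yq] by simp
  also have "\<dots> \<le> objective E n r z" using L yF by (simp add: lexopt_def)
  also obtain pg' where "pg' \<in> candidates E n r" "objective E n r z \<le> objective E n r (fst pg')"
    using lex_cand[OF L] by blast
  then have "objective E n r z \<le> objective E n r p" using mx by (cases pg') force
  finally show "objective E n r q \<le> objective E n r p" .
qed

end

theorem theorem4:
  fixes E :: "nat \<Rightarrow> real" and n r :: nat
  assumes "n \<ge> 2" and "0 < r" and "r < n"
    and A1: "\<forall>i j. 1 \<le> i \<longrightarrow> i < j \<longrightarrow> j \<le> n \<longrightarrow> E j < E i"
    and A1pos: "E n > 0"
    and A2: "\<forall>a\<in>{1..r}. \<forall>b\<in>{r+1..n}. E b * S E a b \<notin> \<int>"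
  shows "(\<forall>(a,c)\<in>X1 E n r. inI n r (p1 E n r a c)) \<and>
         (\<forall>(a,b)\<in>X2 E n r. inI n r (p2 E n r a b)) \<and>
         (\<forall>(b,c)\<in>X3 E n r. inI n r (p3 E n r b c)) \<and>
         feasibleP E n r (p0 n r) (gamma0 E r) \<and>
         (\<forall>(a,c)\<in>X1 E n r. feasibleP E n r (p1 E n r a c) (gamma1 E n r a c)) \<and>
         (\<forall>(a,b)\<in>X2 E n r. feasibleP E n r (p2 E n r a b) (gamma2 E n r a b)) \<and>
         (\<forall>(b,c)\<in>X3 E n r. feasibleP E n r (p3 E n r b c) (gamma3 E n r b c)) \<and>
         (\<forall>(p,\<gamma>)\<in>candidates E n r.
            (\<forall>(q,\<gamma>')\<in>candidates E n r. objective E n r q \<le> objective E n r p)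
            \<longrightarrow> optimalP E n r p \<gamma>)"
proof -
  interpret LP E n r using assms by unfold_locales auto
  have F1: "\<forall>(a,c)\<in>X1 E n r. feasibleP E n r (p1 E n r a c) (gamma1 E n r a c)"
    using p1_feas by blast
  have F2: "\<forall>(a,b)\<in>X2 E n r. feasibleP E n r (p2 E n r a b) (gamma2 E n r a b)"
    using p2_feas by blast
  have F3: "\<forall>(b,c)\<in>X3 E n r. feasibleP E n r (p3 E n r b c) (gamma3 E n r b c)"
    using p3_feas by blast
  have I1: "\<forall>(a,c)\<in>X1 E n r. inI n r (p1 E n r a c)"
    using p1_feas unfolding feasibleP_def by blast
  have I2: "\<forall>(a,b)\<in>X2 E n r. inI n r (p2 E n r a b)"
    using p2_feas unfolding feasibleP_def by blast
  have I3: "\<forall>(b,c)\<in>X3 E n r. inI n r (p3 E n r b c)"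
    using p3_feas unfolding feasibleP_def by blast
  have O: "\<forall>(p,\<gamma>)\<in>candidates E n r.
            (\<forall>(q,\<gamma>')\<in>candidates E n r. objective E n r q \<le> objective E n r p)
            \<longrightarrow> optimalP E n r p \<gamma>"
    using cand_opt by blast
  show ?thesis using I1 I2 I3 p0_feas F1 F2 F3 O by blast
qed


end
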